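(* Let $G\in\Gamma$ be twin-free with $\|G\|<\frac1{15}(9+4\sqrt6)$ (the Schur norm of $\begin{bmatrix}1&1&0\\1&1&1\\0&1&0\end{bmatrix}$). Then (1) $G$ has no induced subgraph isomorphic to the bipartite graph with biadjacency matrix $\begin{bmatrix}1&1&0\\1&1&1\end{bmatrix}$; and (2) every vertex of $G$ has degree at most $3$.
   Context: $\Gamma$ is the collection of all bipartite graphs $G\subseteq R\times C$ with $|R|,|C|\in\{1,2,\dots\}\cup\{\aleph_0\}$; the biadjacency matrix $M(G)$ has $(i,j)$ entry $1$ iff $(r_i,c_j)$ is an edge. $\|G\|$ is the Schur norm $\|M(G)\|_\bullet=\sup\{\|M(G)\bullet X\|:\|X\|\le1\}$ (entrywise product, operator norm on $\ell^2$ spaces over $\mathbb F\in\{\mathbb R,\mathbb C\}$). Induced subgraphs are $G\cap(R_0\times C_0)$; isomorphisms of bipartite graphs may swap the two sides. Two vertices are twins if they have the same neighbour sets; twin-free means no two distinct vertices are twins. *)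

theory Defs
  imports "HOL-Analysis.Analysis"
begin

text \<open>A bipartite graph in Gamma is represented by a nonempty row set R, a nonempty
column set C (subsets of nat, hence of cardinality 1,2,... or aleph_0) and an edge set
G with G \<subseteq> R \<times> C. Row i and column j are distinct vertices even if i = j
as numbers.\<close>

definition in_Gamma :: "nat set \<Rightarrow> nat set \<Rightarrow> (nat \<times> nat) set \<Rightarrow> bool" where
  "in_Gamma R C G \<longleftrightarrow> R \<noteq> {} \<and> C \<noteq> {} \<and> G \<subseteq> R \<times> C"

text \<open>Operator norm (on l2 spaces) of a matrix indexed by R x C, possibly infinite
(value in ereal); computed as the supremum of the bilinear form over finitely supported
vectors in the unit balls.\<close>

definition op_norm :: "nat set \<Rightarrow> nat set \<Rightarrow> (nat \<Rightarrow> nat \<Rightarrow> 'f::real_normed_field) \<Rightarrow> ereal" where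
  "op_norm R C A = Sup { ereal (norm (\<Sum>i\<in>F1. \<Sum>j\<in>F2. u i * A i j * v j)) | F1 F2 u v.
      finite F1 \<and> F1 \<subseteq> R \<and> finite F2 \<and> F2 \<subseteq> C \<and>
      (\<Sum>i\<in>F1. (norm (u i))\<^sup>2) \<le> 1 \<and> (\<Sum>j\<in>F2. (norm (v j))\<^sup>2) \<le> 1 }"

definition biadj :: "(nat \<times> nat) set \<Rightarrow> nat \<Rightarrow> nat \<Rightarrow> 'f::real_normed_field" where
  "biadj G i j = (if (i, j) \<in> G then 1 else 0)"

definition schur_norm :: "'f::real_normed_field itself \<Rightarrow> nat set \<Rightarrow> nat set \<Rightarrow> (nat \<times> nat) set \<Rightarrow> ereal" where
  "schur_norm _ R C G = Sup { op_norm R C (\<lambda>i j. (biadj G i j :: 'f) * X i j) | X :: nat \<Rightarrow> nat \<Rightarrow> 'f.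
      op_norm R C X \<le> 1 }"

definition row_nbrs :: "nat set \<Rightarrow> (nat \<times> nat) set \<Rightarrow> nat \<Rightarrow> nat set" where
  "row_nbrs C G r = {c \<in> C. (r, c) \<in> G}"

definition col_nbrs :: "nat set \<Rightarrow> (nat \<times> nat) set \<Rightarrow> nat \<Rightarrow> nat set" where
  "col_nbrs R G c = {r \<in> R. (r, c) \<in> G}"

definition twin_free :: "nat set \<Rightarrow> nat set \<Rightarrow> (nat \<times> nat) set \<Rightarrow> bool" where
  "twin_free R C G \<longleftrightarrow>
     (\<forall>r1\<in>R. \<forall>r2\<in>R. row_nbrs C G r1 = row_nbrs C G r2 \<longrightarrow> r1 = r2) \<and>
     (\<forall>c1\<in>C. \<forall>c2\<in>C. col_nbrs R G c1 = col_nbrs R G c2 \<longrightarrow> c1 = c2)"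

definition bip_iso :: "nat set \<Rightarrow> nat set \<Rightarrow> (nat \<times> nat) set \<Rightarrow> nat set \<Rightarrow> nat set \<Rightarrow> (nat \<times> nat) set \<Rightarrow> bool" where
  "bip_iso R1 C1 G1 R2 C2 G2 \<longleftrightarrow>
     (\<exists>f g. bij_betw f R1 R2 \<and> bij_betw g C1 C2 \<and>
        (\<forall>r\<in>R1. \<forall>c\<in>C1. (r, c) \<in> G1 \<longleftrightarrow> (f r, g c) \<in> G2)) \<or>
     (\<exists>f g. bij_betw f R1 C2 \<and> bij_betw g C1 R2 \<and>
        (\<forall>r\<in>R1. \<forall>c\<in>C1. (r, c) \<in> G1 \<longleftrightarrow> (g c, f r) \<in> G2))"

definition has_induced :: "nat set \<Rightarrow> nat set \<Rightarrow> (nat \<times> nat) set \<Rightarrow> nat set \<Rightarrow> nat set \<Rightarrow> (nat \<times> nat) set \<Rightarrow> bool" where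
  "has_induced R C G R' C' G' \<longleftrightarrow>
     (\<exists>R0 C0. R0 \<subseteq> R \<and> C0 \<subseteq> C \<and> bip_iso R0 C0 (G \<inter> (R0 \<times> C0)) R' C' G')"

text \<open>The graph with biadjacency matrix [[1,1,0],[1,1,1]]: rows {0,1}, columns {0,1,2}.\<close>

definition H_rows :: "nat set" where "H_rows = {0, 1}"
definition H_cols :: "nat set" where "H_cols = {0, 1, 2}"
definition H_edges :: "(nat \<times> nat) set" where
  "H_edges = {(0,0), (0,1), (1,0), (1,1), (1,2)}"

end

theory Submission
  imports Defs
begin

definition qv :: "'f::real_normed_field \<Rightarrow> real \<Rightarrow> real \<Rightarrow> 'f" where
  "qv x a b = x*x - of_real a * x + of_real b"

lemma dist_real_pos:
  fixes \<xi> :: "'f::real_normed_field"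
  assumes "\<xi> \<notin> \<real>"
  shows "\<exists>d>0. \<forall>t. d \<le> norm (\<xi> - of_real t)"
proof -
  define M where "M = 2 * norm \<xi> + 1"
  have "continuous_on {-M..M} (\<lambda>t. norm (\<xi> - of_real t))" by (intro continuous_intros)
  then obtain t0 where t0: "t0 \<in> {-M..M}" and mn: "\<forall>t\<in>{-M..M}. norm (\<xi> - of_real t0) \<le> norm (\<xi> - of_real t)"
    using continuous_attains_inf[of "{-M..M}" "\<lambda>t. norm (\<xi> - of_real t)"] unfolding M_def by force
  have pos: "norm (\<xi> - of_real t0) > 0" using assms by (auto simp: Reals_def)
  have z: "norm (\<xi> - of_real t0) \<le> norm \<xi>" using mn[rule_format, of 0] norm_ge_zero[of \<xi>] unfolding M_def by simp
  show ?thesis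
  proof (intro exI conjI allI)
    fix t
    show "norm (\<xi> - of_real t0) \<le> norm (\<xi> - of_real t)"
    proof (cases "t \<in> {-M..M}")
      case True thus ?thesis using mn by auto
    next
      case False
      then have "\<bar>t\<bar> > M" by auto
      have "norm (of_real t :: 'f) - norm \<xi> \<le> norm (\<xi> - of_real t)"
        by (metis norm_minus_commute norm_triangle_ineq2)
      then show ?thesis using z \<open>\<bar>t\<bar> > M\<close> unfolding M_def by simp
    qed
  qed (use pos in auto)
qed

lemma quad_min:
  fixes \<xi> :: "'f::real_normed_field"
  assumes "\<xi> \<notin> \<real>"
  shows "\<exists>a0 b0. \<forall>a b. norm (qv \<xi> a0 b0) \<le> norm (qv \<xi> a b)"
proof -
  obtain d where d: "d > 0" "\<And>t. d \<le> norm (\<xi> - of_real t)" using dist_real_pos[OF assms] by auto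
  define n where "n = norm \<xi>"
  define K where "K = (2*n^2+1)/d"
  define L where "L = 2*n^2 + K*n + 1"
  have K0: "K \<ge> 0" using d unfolding K_def by simp
  define S where "S = {-K..K} \<times> {-L..L}"
  have cS: "compact S" unfolding S_def by (intro compact_Times compact_Icc)
  have "0 \<le> K * n" "0 \<le> n^2" using K0 unfolding n_def by auto
  then have "-L \<le> 0" unfolding L_def by linarith
  then have ne: "(0,0) \<in> S" unfolding S_def using K0 by auto
  have "continuous_on S (\<lambda>p. norm (qv \<xi> (fst p) (snd p)))" unfolding qv_def by (intro continuous_intros)
  then obtain p0 where p0: "p0 \<in> S" and mn: "\<forall>p\<in>S. norm (qv \<xi> (fst p0) (snd p0)) \<le> norm (qv \<xi> (fst p) (snd p))"
    using continuous_attains_inf[OF cS] ne by blast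
  have m0: "norm (qv \<xi> (fst p0) (snd p0)) \<le> n^2"
    using mn[rule_format, OF ne] by (simp add: qv_def n_def norm_mult power2_eq_square)
  have out: "n^2 < norm (qv \<xi> a b)" if "(a,b) \<notin> S" for a b
  proof (cases "\<bar>a\<bar> > K")
    case True
    then have a0: "a \<noteq> 0" using K0 by auto
    have e1: "(of_real a :: 'f) * (\<xi> - of_real (b/a)) = of_real a * \<xi> - of_real (a * (b/a))"
      by (simp add: right_diff_distrib of_real_mult)
    have "a * (b/a) = b" using a0 by simp
    then have "of_real a * \<xi> - of_real b = (of_real a :: 'f) * (\<xi> - of_real (b/a))"
      using e1 by simp
    then have "norm (of_real a * \<xi> - of_real b :: 'f) = \<bar>a\<bar> * norm (\<xi> - of_real (b/a))"
      by (simp add: norm_mult)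
    also have "\<dots> \<ge> \<bar>a\<bar> * d" using d(2)[of "b/a"] by (simp add: mult_left_mono)
    finally have h1: "\<bar>a\<bar> * d \<le> norm (of_real a * \<xi> - of_real b :: 'f)" .
    have h2: "norm (of_real a * \<xi> - of_real b :: 'f) \<le> norm (qv \<xi> a b) + n^2"
    proof -
      have "of_real a * \<xi> - of_real b = \<xi>*\<xi> - qv \<xi> a b" by (simp add: qv_def)
      then have "norm (of_real a * \<xi> - of_real b :: 'f) \<le> norm (\<xi>*\<xi>) + norm (qv \<xi> a b)"
        by (metis norm_triangle_ineq4)
      then show ?thesis by (simp add: norm_mult n_def power2_eq_square)
    qed
    have "K * d = 2*n^2+1" unfolding K_def using d by simp
    moreover have "K * d < \<bar>a\<bar> * d" using True d by simp
    ultimately show ?thesis using h1 h2 by linarith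
  next
    case False
    then have "\<bar>b\<bar> > L" using that unfolding S_def by auto
    have "of_real b = qv \<xi> a b - \<xi>*\<xi> + of_real a * \<xi>" by (simp add: qv_def)
    then have "norm (of_real b :: 'f) \<le> norm (qv \<xi> a b) + norm (\<xi>*\<xi>) + norm (of_real a * \<xi>)"
    proof -
      have "norm (qv \<xi> a b - \<xi>*\<xi> + of_real a * \<xi>) \<le> norm (qv \<xi> a b - \<xi>*\<xi>) + norm (of_real a * \<xi>)"
        by (rule norm_triangle_ineq)
      moreover have "norm (qv \<xi> a b - \<xi>*\<xi>) \<le> norm (qv \<xi> a b) + norm (\<xi>*\<xi>)"
        by (rule norm_triangle_ineq4)
      ultimately show ?thesis using \<open>of_real b = _\<close> by simp
    qed
    then have "\<bar>b\<bar> \<le> norm (qv \<xi> a b) + n^2 + \<bar>a\<bar> * n" by (simp add: norm_mult n_def power2_eq_square)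
    moreover have "\<bar>a\<bar> * n \<le> K * n" using False by (simp add: mult_right_mono n_def)
    ultimately show ?thesis using \<open>\<bar>b\<bar> > L\<close> unfolding L_def by linarith
  qed
  show ?thesis
  proof (intro exI allI)
    fix a b
    show "norm (qv \<xi> (fst p0) (snd p0)) \<le> norm (qv \<xi> a b)"
    proof (cases "(a,b) \<in> S")
      case True then show ?thesis using mn by force
    next
      case False then show ?thesis using out[OF False] m0 by linarith
    qed
  qed
qed

lemma poly4:
  fixes x :: "'f::real_normed_field"
  assumes "a1 + a2 = 2*a" "b1 + b2 + a1*a2 = a^2 + 2*b + \<beta>"
    "a1*b2 + a2*b1 = 2*a*b + \<beta>*a" "b1*b2 = b^2 + \<beta>*b + \<gamma>"
  shows "(qv x a b)^2 + of_real \<beta> * qv x a b + of_real \<gamma> = qv x a1 b1 * qv x a2 b2"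
proof -
  have "qv x a1 b1 * qv x a2 b2 = x^4 - of_real (a1+a2) * x^3 + of_real (b1 + b2 + a1*a2) * x^2
      - of_real (a1*b2 + a2*b1) * x + of_real (b1*b2)"
    unfolding qv_def of_real_add of_real_mult by (simp add: algebra_simps power2_eq_square power3_eq_cube power4_eq_xxxx)
  also have "\<dots> = x^4 - of_real (2*a) * x^3 + of_real (a^2 + 2*b + \<beta>) * x^2
      - of_real (2*a*b + \<beta>*a) * x + of_real (b^2 + \<beta>*b + \<gamma>)" using assms by simp
  also have "\<dots> = (qv x a b)^2 + of_real \<beta> * qv x a b + of_real \<gamma>"
    unfolding qv_def of_real_add of_real_mult of_real_power by (simp add: algebra_simps power2_eq_square power3_eq_cube power4_eq_xxxx)
  finally show ?thesis by simp
qed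

lemma quartic_factor:
  fixes a b \<beta> \<gamma> :: real
  shows "\<exists>a1 b1 a2 b2. a1 + a2 = 2*a \<and> b1 + b2 + a1*a2 = a^2 + 2*b + \<beta> \<and>
    a1*b2 + a2*b1 = 2*a*b + \<beta>*a \<and> b1*b2 = b^2 + \<beta>*b + \<gamma>"
proof -
  define B where "B = b - a^2/4"
  define P where "P = 2*B + \<beta>"
  define Q where "Q = B^2 + \<beta>*B + \<gamma>"
  show ?thesis
  proof (cases "P^2 \<ge> 4*Q")
    case True
    define D where "D = sqrt (P^2 - 4*Q)"
    have D2: "D^2 = P^2 - 4*Q" unfolding D_def using True by simp
    define s1 where "s1 = (-P + D)/2"
    define s2 where "s2 = (-P - D)/2"
    show ?thesis
      apply (rule exI[of _ a], rule exI[of _ "a^2/4 - s1"], rule exI[of _ a], rule exI[of _ "a^2/4 - s2"])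
      using D2 unfolding s1_def s2_def P_def Q_def B_def
      by (auto simp: field_simps power2_eq_square) (simp add: algebra_simps)?
  next
    case False
    then have Qp: "Q > 0" using zero_le_power2[of P] by linarith
    define q where "q = sqrt Q"
    have q2: "q^2 = Q" and q0: "q > 0" unfolding q_def using Qp by auto
    have "P < 2*q"
    proof (rule ccontr)
      assume "\<not> P < 2*q"
      then have "(2*q)^2 \<le> P^2" using q0 by (intro power_mono) auto
      then show False using False q2 by (simp add: power_mult_distrib)
    qed
    define r where "r = sqrt (2*q - P)"
    have r2: "r^2 = 2*q - P" unfolding r_def using \<open>P < 2*q\<close> by simp
    show ?thesis
      apply (rule exI[of _ "a + r"], rule exI[of _ "a^2/4 + r*a/2 + q"], rule exI[of _ "a - r"], rule exI[of _ "a^2/4 - r*a/2 + q"])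
      using r2 q2 unfolding P_def Q_def B_def
      by (auto simp: field_simps power2_eq_square; algebra)
  qed
qed

lemma F2:
  fixes \<xi> :: "'f::real_normed_field"
  assumes mn: "\<forall>a b. m \<le> norm (qv \<xi> a b)" and m0: "m \<ge> 0"
  shows "m^2 \<le> norm ((qv \<xi> a b)^2 + of_real \<beta> * qv \<xi> a b + of_real \<gamma>)"
proof -
  obtain a1 b1 a2 b2 where h: "a1 + a2 = 2*a" "b1 + b2 + a1*a2 = a^2 + 2*b + \<beta>"
    "a1*b2 + a2*b1 = 2*a*b + \<beta>*a" "b1*b2 = b^2 + \<beta>*b + \<gamma>"
    using quartic_factor[of a b \<beta> \<gamma>] by blast
  have eq: "(qv \<xi> a b)^2 + of_real \<beta> * qv \<xi> a b + of_real \<gamma> = qv \<xi> a1 b1 * qv \<xi> a2 b2"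
    using poly4[OF h] by blast
  have "m*m \<le> norm (qv \<xi> a1 b1) * norm (qv \<xi> a2 b2)" using mn m0 by (intro mult_mono) auto
  then show ?thesis using eq by (simp add: norm_mult power2_eq_square)
qed

lemma id2:
  fixes Z :: "'f::real_normed_field"
  assumes "\<sigma>^2 = 2 - s"
  shows "Z^4 + of_real (s*C^2) * Z^2 + of_real (C^4) =
    (Z^2 + of_real (\<sigma>*C) * Z + of_real (C^2)) * (Z^2 + of_real (-\<sigma>*C) * Z + of_real (C^2))"
proof -
  have "(Z^2 + of_real (\<sigma>*C) * Z + of_real (C^2)) * (Z^2 + of_real (-\<sigma>*C) * Z + of_real (C^2))
     = Z^4 + of_real (2*C^2 - \<sigma>^2*C^2) * Z^2 + of_real (C^4)"
    unfolding of_real_mult of_real_diff of_real_power of_real_minus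
    by (simp add: algebra_simps power2_eq_square power4_eq_xxxx)
  also have "2*C^2 - \<sigma>^2*C^2 = s*C^2" unfolding assms by (simp add: algebra_simps)
  finally show ?thesis by simp
qed

lemma F3:
  fixes \<xi> :: "'f::real_normed_field"
  assumes mn: "\<forall>a b. m \<le> norm (qv \<xi> a b)" and m0: "m \<ge> 0"
  shows "\<forall>s. -2 \<le> s \<longrightarrow> s \<le> 2 \<longrightarrow> m^(2^(i+1)) \<le> norm ((qv \<xi> a b)^(2^(i+1)) + of_real (s * e^(2^i)) * (qv \<xi> a b)^(2^i) + of_real (e^(2^(i+1))))"
proof (induction i)
  case 0
  { fix s :: real
    have "m ^ 2 ^ (0 + 1) \<le> norm (qv \<xi> a b ^ 2 ^ (0 + 1) + of_real (s * e ^ 2 ^ 0) * qv \<xi> a b ^ 2 ^ 0 + of_real (e ^ 2 ^ (0 + 1)))"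
      using F2[OF mn m0, of a b "s * e^(2^0)" "e^(2^(0+1))"] by simp }
  then show ?case by blast
next
  case (Suc i)
  show ?case
  proof (intro allI impI)
    fix s :: real assume s: "-2 \<le> s" "s \<le> 2"
    define \<sigma> where "\<sigma> = sqrt (2 - s)"
    have \<sigma>2: "\<sigma>^2 = 2 - s" unfolding \<sigma>_def using s by simp
    have \<sigma>0: "0 \<le> \<sigma>" unfolding \<sigma>_def using s by simp
    have "\<sigma> \<le> sqrt 4" unfolding \<sigma>_def using s by (intro real_sqrt_le_mono) simp
    then have \<sigma>1: "\<sigma> \<le> 2" by simp
    define y where "y = qv \<xi> a b"
    define Z where "Z = y^(2^i)"
    define C where "C = e^(2^i)"
    have p1: "y^(2^(Suc i + 1)) = Z^4" unfolding Z_def by (simp add: power_mult[symmetric] mult.commute)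
    have p2: "y^(2^(Suc i)) = Z^2" unfolding Z_def by (simp add: power_mult[symmetric] mult.commute)
    have p3: "y^(2^(i + 1)) = Z^2" unfolding Z_def by (simp add: power_mult[symmetric] mult.commute)
    have q1: "e^(2^(Suc i + 1)) = C^4" unfolding C_def by (simp add: power_mult[symmetric] mult.commute)
    have q2: "e^(2^(Suc i)) = C^2" unfolding C_def by (simp add: power_mult[symmetric] mult.commute)
    have q3: "e^(2^(i + 1)) = C^2" unfolding C_def by (simp add: power_mult[symmetric] mult.commute)
    have s0: "-2 \<le> \<sigma>" "-2 \<le> -\<sigma>" "-\<sigma> \<le> 2" using \<sigma>0 \<sigma>1 by auto
    have A1: "m^(2^(i+1)) \<le> norm (Z^2 + of_real (\<sigma> * C) * Z + of_real (C^2))"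
      using Suc.IH[rule_format, of \<sigma>, OF s0(1) \<sigma>1, folded y_def, unfolded p3 q3, folded Z_def C_def] .
    have A2: "m^(2^(i+1)) \<le> norm (Z^2 + of_real (-\<sigma> * C) * Z + of_real (C^2))"
      using Suc.IH[rule_format, of "-\<sigma>", OF s0(2) s0(3), folded y_def, unfolded p3 q3, folded Z_def C_def] .
    have "m^(2^(Suc i+1)) = m^(2^(i+1)) * m^(2^(i+1))" by (simp add: power_add[symmetric])
    also have "\<dots> \<le> norm (Z^2 + of_real (\<sigma> * C) * Z + of_real (C^2)) * norm (Z^2 + of_real (-\<sigma> * C) * Z + of_real (C^2))"
      using A1 A2 m0 by (intro mult_mono) auto
    also have "\<dots> = norm (Z^4 + of_real (s*C^2) * Z^2 + of_real (C^4))"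
      unfolding id2[OF \<sigma>2] norm_mult ..
    finally show "m^(2^(Suc i+1)) \<le> norm (qv \<xi> a b ^ 2 ^ (Suc i + 1) + of_real (s * e ^ 2 ^ Suc i) * qv \<xi> a b ^ 2 ^ Suc i + of_real (e ^ 2 ^ (Suc i + 1)))"
      unfolding y_def[symmetric] p1 p2 q1 q2 .
  qed
qed

lemma F4:
  fixes y :: "'f::real_normed_field"
  assumes h: "\<forall>i. m^(2^(i+1)) \<le> norm (y^(2^(i+1)) + of_real (e^(2^(i+1))))" and m0: "m \<ge> 0"
  shows "norm (y + of_real e) * norm (y - of_real e) * m^(2^(j+1) - 2) \<le> norm (y^(2^(j+1)) - of_real (e^(2^(j+1))))"
proof (induction j)
  case 0
  have "y^2 - of_real (e^2) = (y + of_real e) * (y - of_real e)"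
    by (simp add: algebra_simps power2_eq_square)
  then show ?case by (simp add: norm_mult)
next
  case (Suc j)
  define Y where "Y = y^(2^(j+1))"
  define E where "E = e^(2^(j+1))"
  have p: "y^(2^(Suc j+1)) = Y^2" unfolding Y_def by (simp add: power_mult[symmetric] mult.commute)
  have q: "e^(2^(Suc j+1)) = E^2" unfolding E_def by (simp add: power_mult[symmetric] mult.commute)
  have fac: "Y^2 - of_real (E^2) = (Y - of_real E) * (Y + of_real E)"
    by (simp add: algebra_simps power2_eq_square)
  have ge2: "(2::nat) \<le> 2^(j+1)" by (simp add: self_le_power)
  have e1: "(2::nat)^(Suc j+1) = 2^(j+1) + 2^(j+1)" by simp
  have ex: "2^(Suc j+1) - 2 = (2^(j+1) - 2) + (2::nat)^(j+1)" using ge2 e1 by linarith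
  have pe: "m^(2^(Suc j+1) - 2) = m^(2^(j+1) - 2) * m^(2^(j+1))" unfolding ex by (rule power_add)
  have "norm (y + of_real e) * norm (y - of_real e) * m^(2^(Suc j+1) - 2)
     = (norm (y + of_real e) * norm (y - of_real e) * m^(2^(j+1) - 2)) * m^(2^(j+1))"
    using pe by (simp only: mult.assoc)
  also have "\<dots> \<le> norm (Y - of_real E) * norm (Y + of_real E)"
    using Suc.IH h[rule_format, of j] m0 unfolding Y_def E_def by (intro mult_mono) auto
  also have "\<dots> = norm (y^(2^(Suc j+1)) - of_real (e^(2^(Suc j+1))))"
    unfolding p q fac norm_mult ..
  finally show ?case .
qed

lemma key_step:
  fixes \<xi> :: "'f::real_normed_field"
  assumes mn: "\<forall>a b. m \<le> norm (qv \<xi> a b)" and m0: "m > 0" and hm: "norm (qv \<xi> a b) = m"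
  shows "norm (qv \<xi> a (b + m/2)) \<le> m"
proof (rule ccontr)
  define e where "e = m/2"
  define y where "y = qv \<xi> a b"
  assume "\<not> ?thesis"
  moreover have "qv \<xi> a (b + m/2) = y + of_real e" unfolding y_def e_def qv_def by simp
  ultimately have gt: "norm (y + of_real e) > m" by simp
  have "qv \<xi> a (b - e) = y - of_real e" unfolding y_def qv_def by simp
  then have ym: "norm (y - of_real e) \<ge> m" using mn by metis
  have F3': "\<forall>i. m^(2^(i+1)) \<le> norm (y^(2^(i+1)) + of_real (e^(2^(i+1))))"
  proof
    fix i
    have "-2 \<le> (0::real)" "(0::real) \<le> 2" by auto
    from F3[OF mn, where a=a and b=b and e=e and i=i, rule_format, OF _ this] m0
    show "m^(2^(i+1)) \<le> norm (y^(2^(i+1)) + of_real (e^(2^(i+1))))" unfolding y_def by simp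
  qed
  define \<delta> where "\<delta> = norm (y + of_real e) - m"
  have \<delta>0: "\<delta> > 0" using gt unfolding \<delta>_def by simp
  obtain n where n: "(1/2::real)^n < \<delta>/m" using real_arch_pow_inv[of "\<delta>/m" "1/2"] \<delta>0 m0 by auto
  define N where "N = (2::nat)^(n+1)"
  have "n < 2^n" by (rule less_exp)
  moreover have "(2::nat)^n \<le> 2^(n+1)" by (intro power_increasing) auto
  ultimately have Nn: "n \<le> N" unfolding N_def by linarith
  have N2: "2 \<le> N" unfolding N_def by (simp add: self_le_power)
  have up: "norm (y^N - of_real (e^N)) \<le> m^N + e^N"
  proof -
    have "norm (y^N - of_real (e^N)) \<le> norm (y^N) + norm (of_real (e^N) :: 'f)" by (rule norm_triangle_ineq4)
    also have "\<dots> = m^N + e^N" using hm m0 unfolding y_def e_def by (simp add: norm_power)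
    finally show ?thesis .
  qed
  have lo: "norm (y + of_real e) * m * m^(N-2) \<le> m^N + e^N"
  proof -
    have "norm (y + of_real e) * m * m^(N-2) \<le> norm (y + of_real e) * norm (y - of_real e) * m^(N-2)"
      using ym m0 by (intro mult_right_mono mult_left_mono) auto
    also have "\<dots> \<le> norm (y^N - of_real (e^N))" using F4[OF F3' less_imp_le[OF m0], where j=n] unfolding N_def by simp
    finally show ?thesis using up by simp
  qed
  have N1: "N - 1 = Suc (N - 2)" "N = Suc (N - 1)" using N2 by auto
  have mN: "m * m^(N-2) = m^(N-1)" unfolding N1(1) by simp
  have mN2: "m^N = m * m^(N-1)" by (subst N1(2), simp)
  have eN: "e^N = m^N * (1/2)^N" unfolding e_def by (simp add: power_divide)
  have pos: "m^(N-1) > 0" using m0 by simp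
  have "norm (y + of_real e) * m^(N-1) \<le> (m + m*(1/2)^N) * m^(N-1)"
    using lo unfolding mult.assoc mN eN mN2 by (simp add: algebra_simps)
  then have "norm (y + of_real e) \<le> m + m*(1/2)^N" using pos by simp
  also have "(1/2::real)^N \<le> (1/2)^n" using Nn by (intro power_decreasing) auto
  then have "m + m*(1/2)^N \<le> m + m*(1/2)^n" using m0 by simp
  also have "m*(1/2)^n < \<delta>" using n m0 by (simp add: field_simps)
  finally have "norm (y + of_real e) < m + \<delta>" by simp
  then show False unfolding \<delta>_def by simp
qed

lemma quad_root:
  fixes \<xi> :: "'f::real_normed_field"
  assumes "\<xi> \<notin> \<real>"
  shows "\<exists>a b. qv \<xi> a b = 0"
proof -
  obtain a0 b0 where mn0: "\<forall>a b. norm (qv \<xi> a0 b0) \<le> norm (qv \<xi> a b)" using quad_min[OF assms] by blast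
  define m where "m = norm (qv \<xi> a0 b0)"
  show ?thesis
  proof (cases "m = 0")
    case True then show ?thesis unfolding m_def by auto
  next
    case False
    then have m0: "m > 0" unfolding m_def by simp
    have mn: "\<forall>a b. m \<le> norm (qv \<xi> a b)" using mn0 unfolding m_def by blast
    have all: "norm (qv \<xi> a0 (b0 + real k * (m/2))) = m" for k
    proof (induction k)
      case 0 then show ?case unfolding m_def by simp
    next
      case (Suc k)
      have "norm (qv \<xi> a0 (b0 + real k * (m/2) + m/2)) \<le> m" by (rule key_step[OF mn m0 Suc.IH])
      moreover have "b0 + real k * (m/2) + m/2 = b0 + real (Suc k) * (m/2)" by (simp add: algebra_simps)
      ultimately show ?case using mn by (metis antisym)
    qed
    have "qv \<xi> a0 (b0 + real 5 * (m/2)) = qv \<xi> a0 b0 + of_real (5*m/2)" unfolding qv_def by simp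
    then have "norm (of_real (5*m/2) :: 'f) \<le> norm (qv \<xi> a0 (b0 + real 5 * (m/2))) + norm (qv \<xi> a0 b0)"
      by (metis add_diff_cancel_left' norm_triangle_ineq4 add.commute)
    then have "5*m/2 \<le> m + m" using all[of 5] m0 unfolding m_def by simp
    then show ?thesis using m0 by simp
  qed
qed

lemma sqrt_minus_one:
  fixes \<xi> :: "'f::real_normed_field"
  assumes "\<xi> \<notin> \<real>"
  shows "\<exists>c k w. k > 0 \<and> w * w = -1 \<and> \<xi> = of_real c + of_real k * w"
proof -
  obtain a b where ab: "\<xi>*\<xi> - of_real a * \<xi> + of_real b = 0" using quad_root[OF assms] unfolding qv_def by blast
  show ?thesis
  proof (cases "a^2 \<ge> 4*b")
    case True
    define D where "D = sqrt (a^2 - 4*b)"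
    have D2: "D^2 = a^2 - 4*b" unfolding D_def using True by simp
    define r1 where "r1 = (a + D)/2"
    define r2 where "r2 = (a - D)/2"
    have e: "(\<xi> - of_real r1) * (\<xi> - of_real r2) = \<xi>*\<xi> - of_real (r1 + r2) * \<xi> + of_real (r1*r2)"
      by (simp add: algebra_simps)
    have "r1 + r2 = a" unfolding r1_def r2_def by (simp add: field_simps)
    moreover have "r1 * r2 = b" unfolding r1_def r2_def using D2 by (simp add: field_simps power2_eq_square)
    ultimately have "(\<xi> - of_real r1) * (\<xi> - of_real r2) = 0" using ab e by simp
    then have "\<xi> = of_real r1 \<or> \<xi> = of_real r2" by simp
    then show ?thesis using assms by auto
  next
    case False
    define k where "k = sqrt (b - a^2/4)"
    have k0: "k > 0" unfolding k_def using False by simp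
    have k2: "k*k = b - a^2/4" unfolding k_def using False by simp
    define w where "w = (\<xi> - of_real (a/2)) / of_real k"
    have xi: "\<xi> = of_real (a/2) + of_real k * w" unfolding w_def using k0 by simp
    have "(of_real k * w) * (of_real k * w) = (\<xi> - of_real (a/2)) * (\<xi> - of_real (a/2))"
      using xi by simp
    also have "\<dots> = \<xi>*\<xi> - of_real a * \<xi> + of_real (a^2/4)"
      by (simp add: algebra_simps power2_eq_square flip: of_real_mult)
    also have "\<dots> = (\<xi>*\<xi> - of_real a * \<xi> + of_real b) + of_real (a^2/4 - b)"
      by (simp add: of_real_diff)
    also have "\<dots> = of_real (a^2/4 - b)" using ab by simp
    also have "\<dots> = of_real (k*k) * (-1)" using k2 by simp
    finally have "of_real (k*k) * (w*w) = of_real (k*k) * (-1 :: 'f)" by (simp add: algebra_simps)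
    moreover have nz: "(of_real (k*k) :: 'f) \<noteq> 0" using k0 by simp
    ultimately have "w*w = -1" using mult_left_cancel[OF nz] by blast
    then show ?thesis using k0 xi by blast
  qed
qed

lemma w_not_real:
  fixes w :: "'f::real_normed_field"
  assumes w: "w*w = -1"
  shows "w \<notin> \<real>"
proof
  assume "w \<in> \<real>"
  then obtain r where r: "w = of_real r" by (auto elim: Reals_cases)
  then have "of_real (r*r) = (of_real (-1) :: 'f)" using w by simp
  then have "r*r = -1" by (simp only: of_real_eq_iff)
  then show False using zero_le_square[of r] by linarith
qed

lemma w_decomp:
  fixes w :: "'f::real_normed_field"
  assumes w: "w*w = -1"
  shows "\<exists>p q. z = of_real p + of_real q * w"
proof (cases "z \<in> \<real>")
  case True
  then obtain p where "z = of_real p" by (auto elim: Reals_cases)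
  then show ?thesis by (intro exI[of _ p] exI[of _ 0]) simp
next
  case False
  obtain c k w' where w': "w'*w' = -1" "z = of_real c + of_real k * w'" using sqrt_minus_one[OF False] by blast
  have "(w' - w) * (w' + w) = 0" using w w' by (simp add: algebra_simps)
  then have "w' = w \<or> w' = -w" by (auto simp: eq_neg_iff_add_eq_0)
  then show ?thesis
  proof
    assume "w' = w" then show ?thesis using w' by blast
  next
    assume "w' = -w" then have "z = of_real c + of_real (-k) * w" using w' by simp
    then show ?thesis by blast
  qed
qed

lemma w_unique:
  fixes w :: "'f::real_normed_field"
  assumes w: "w*w = -1" and e: "of_real p + of_real q * w = of_real p' + of_real q' * (w::'f)"
  shows "p = p' \<and> q = q'"
proof (cases "q = q'")
  case True then show ?thesis using e by simp
next
  case False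
  have "of_real (q - q') * w = (of_real (p' - p) :: 'f)" using e by (simp add: algebra_simps)
  then have "w = of_real ((p' - p) / (q - q'))" using False
    by (simp add: field_simps)
  then have "w \<in> \<real>" by simp
  then show ?thesis using w_not_real[OF w] by simp
qed

lemma w_norm1:
  fixes w :: "'f::real_normed_field"
  assumes w: "w*w = -1"
  shows "norm w = 1"
proof -
  have "norm w * norm w = 1" using w by (simp flip: norm_mult)
  then have "(norm w - 1) * (norm w + 1) = 0" by (simp add: algebra_simps)
  moreover have "norm w + 1 \<noteq> 0" using norm_ge_zero[of w] by linarith
  ultimately show ?thesis by simp
qed

lemma unit_powers:
  fixes w :: "'f::real_normed_field"
  assumes w: "w*w = -1" and pq: "p^2 + q^2 = 1"
  shows "\<exists>pn qn. (of_real p + of_real q * w)^n = of_real pn + of_real qn * w \<and> pn^2 + qn^2 = 1"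
proof (induction n)
  case 0 show ?case by (intro exI[of _ 1] exI[of _ 0]) simp
next
  case (Suc n)
  then obtain pn qn where h: "(of_real p + of_real q * w)^n = of_real pn + of_real qn * w" "pn^2 + qn^2 = 1" by blast
  have "(of_real p + of_real q * w)^(Suc n) = (of_real p + of_real q * w) * (of_real pn + of_real qn * w)"
    using h by simp
  also have "\<dots> = of_real (p*pn) + of_real (p*qn) * w + of_real (q*pn) * w + of_real (q*qn) * (w*w)"
    by (simp add: algebra_simps)
  also have "\<dots> = of_real (p*pn - q*qn) + of_real (p*qn + q*pn) * w" using w by (simp add: algebra_simps)
  finally show ?case
  proof (intro exI conjI)
    show "(p*pn - q*qn)^2 + (p*qn + q*pn)^2 = 1"
    proof -
      have "(p*pn - q*qn)^2 + (p*qn + q*pn)^2 = (p^2+q^2)*(pn^2+qn^2)" by (simp add: algebra_simps power2_eq_square)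
      then show ?thesis using pq h(2) by simp
    qed
  qed
qed

lemma unit_norm_le:
  fixes w :: "'f::real_normed_field"
  assumes w: "w*w = -1" and pq: "p^2 + q^2 = 1"
  shows "norm (of_real p + of_real q * w) \<le> 1"
proof (rule ccontr)
  let ?z = "of_real p + of_real q * w"
  assume "\<not> ?thesis"
  then have gt: "norm ?z > 1" by simp
  obtain n where n: "2 < norm ?z ^ n" using real_arch_pow[OF gt] by blast
  obtain pn qn where h: "?z^n = of_real pn + of_real qn * w" "pn^2 + qn^2 = 1" using unit_powers[OF w pq] by blast
  have "pn^2 \<le> 1" "qn^2 \<le> 1" using h(2) zero_le_power2[of qn] zero_le_power2[of pn] by linarith+
  then have "\<bar>pn\<bar> \<le> 1" "\<bar>qn\<bar> \<le> 1" by (simp_all add: abs_square_le_1)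
  then have "norm (of_real pn + of_real qn * w) \<le> 2"
    using norm_triangle_ineq[of "of_real pn :: 'f" "of_real qn * w"] w_norm1[OF w] by (simp add: norm_mult)
  moreover have "norm ?z ^ n = norm (of_real pn + of_real qn * w)" unfolding h(1)[symmetric] by (rule norm_power[symmetric])
  ultimately show False using n by linarith
qed

lemma unit_norm:
  fixes w :: "'f::real_normed_field"
  assumes w: "w*w = -1" and pq: "p^2 + q^2 = 1"
  shows "norm (of_real p + of_real q * w) = 1"
proof -
  have a: "norm (of_real p + of_real q * w) \<le> 1" using unit_norm_le[OF w pq] .
  have b: "norm (of_real p + of_real (-q) * w) \<le> 1" using unit_norm_le[OF w, of p "-q"] pq by simp
  have "(of_real p + of_real q * w) * (of_real p + of_real (-q) * w) = of_real (p^2 + q^2) - of_real (q*q) * (w*w + 1)"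
    by (simp add: algebra_simps power2_eq_square)
  also have "\<dots> = 1" using pq w by simp
  finally have "norm ((of_real p + of_real q * w) * (of_real p + of_real (-q) * w)) = 1" by simp
  then have prod: "norm (of_real p + of_real q * w) * norm (of_real p + of_real (-q) * w) = 1"
    by (simp only: norm_mult)
  show ?thesis
  proof (rule ccontr)
    assume "norm (of_real p + of_real q * w) \<noteq> 1"
    then have lt: "norm (of_real p + of_real q * w) < 1" using a by simp
    have "norm (of_real p + of_real q * w) * norm (of_real p + of_real (-q) * w) \<le> norm (of_real p + of_real q * w) * 1"
      using b by (intro mult_left_mono) auto
    then show False using prod lt by simp
  qed
qed

lemma gen_norm:
  fixes w :: "'f::real_normed_field"
  assumes w: "w*w = -1"
  shows "norm (of_real p + of_real q * w) = sqrt (p^2 + q^2)"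
proof (cases "p^2 + q^2 = 0")
  case True then have "p = 0" "q = 0" by (auto simp: add_nonneg_eq_0_iff)
  then show ?thesis by simp
next
  case False
  define \<rho> where "\<rho> = sqrt (p^2 + q^2)"
  have "p^2 + q^2 > 0" using False zero_le_power2[of p] zero_le_power2[of q] by linarith
  then have \<rho>0: "\<rho> > 0" unfolding \<rho>_def by (rule real_sqrt_gt_zero)
  have \<rho>2: "\<rho>^2 = p^2 + q^2" unfolding \<rho>_def by simp
  have "(p/\<rho>)^2 + (q/\<rho>)^2 = (p^2 + q^2) / \<rho>^2" by (simp add: power_divide add_divide_distrib)
  also have "\<dots> = 1" unfolding \<rho>2[symmetric] using \<rho>0 by simp
  finally have "(p/\<rho>)^2 + (q/\<rho>)^2 = 1" .
  then have n1: "norm (of_real (p/\<rho>) + of_real (q/\<rho>) * w) = 1" using unit_norm[OF w] by blast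
  have "of_real p + of_real q * w = of_real \<rho> * (of_real (p/\<rho>) + of_real (q/\<rho>) * w)"
  proof -
    have r: "\<rho> * (p/\<rho>) = p" "\<rho> * (q/\<rho>) = q" using \<rho>0 by auto
    have "of_real \<rho> * (of_real (p/\<rho>) + of_real (q/\<rho>) * w) = of_real (\<rho>*(p/\<rho>)) + of_real (\<rho>*(q/\<rho>)) * (w::'f)"
      by (simp only: distrib_left of_real_mult mult.assoc)
    then show ?thesis unfolding r by simp
  qed
  then have "norm (of_real p + of_real q * w) = \<rho>" using n1 \<rho>0 by (simp add: norm_mult)
  then show ?thesis unfolding \<rho>_def .
qed

lemma embed_complex:
  "\<exists>\<phi>::'f::real_normed_field \<Rightarrow> complex. (\<forall>x y. \<phi> (x + y) = \<phi> x + \<phi> y) \<and> (\<forall>x y. \<phi> (x*y) = \<phi> x * \<phi> y)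
     \<and> (\<forall>r. \<phi> (of_real r) = of_real r) \<and> (\<forall>x. norm (\<phi> x) = norm x)"
proof (cases "\<exists>w::'f. w*w = -1")
  case True
  then obtain w :: 'f where w: "w*w = -1" by blast
  define co where "co z = (SOME pq. z = of_real (fst pq) + of_real (snd pq) * w)" for z
  have co: "z = of_real (fst (co z)) + of_real (snd (co z)) * w" for z
  proof -
    obtain p q where "z = of_real p + of_real q * w" using w_decomp[OF w] by blast
    then have "\<exists>pq. z = of_real (fst pq) + of_real (snd pq) * w" by (intro exI[of _ "(p,q)"]) simp
    then show ?thesis unfolding co_def by (rule someI_ex)
  qed
  have uniq: "co z = (p,q)" if "z = of_real p + of_real q * w" for z p q
    using w_unique[OF w, of "fst (co z)" "snd (co z)" p q] co[of z] that by (simp add: prod_eq_iff)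
  define \<phi> where "\<phi> z = Complex (fst (co z)) (snd (co z))" for z
  have ph: "\<phi> z = Complex p q" if "z = of_real p + of_real q * w" for z p q
    unfolding \<phi>_def uniq[OF that] by simp
  show ?thesis
  proof (intro exI[of _ \<phi>] conjI allI)
    fix x y
    let ?p1 = "fst (co x)" and ?q1 = "snd (co x)" and ?p2 = "fst (co y)" and ?q2 = "snd (co y)"
    have "x + y = of_real (?p1 + ?p2) + of_real (?q1 + ?q2) * w"
      using co[of x] co[of y] by (simp add: algebra_simps)
    then have e1: "\<phi> (x + y) = Complex (?p1 + ?p2) (?q1 + ?q2)" by (rule ph)
    then show "\<phi> (x + y) = \<phi> x + \<phi> y" by (intro complex_eqI) (simp_all add: \<phi>_def)
    have "x * y = (of_real ?p1 + of_real ?q1 * w) * (of_real ?p2 + of_real ?q2 * w)"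
      using co[of x] co[of y] by simp
    also have "\<dots> = of_real (?p1 * ?p2) + of_real (?p1 * ?q2 + ?q1 * ?p2) * w + of_real (?q1 * ?q2) * (w*w)"
      by (simp add: algebra_simps)
    also have "\<dots> = of_real (?p1 * ?p2 - ?q1 * ?q2) + of_real (?p1 * ?q2 + ?q1 * ?p2) * w"
      using w by (simp add: algebra_simps)
    finally have e2: "\<phi> (x * y) = Complex (?p1 * ?p2 - ?q1 * ?q2) (?p1 * ?q2 + ?q1 * ?p2)" by (rule ph)
    then show "\<phi> (x * y) = \<phi> x * \<phi> y" by (intro complex_eqI) (simp_all add: \<phi>_def)
  next
    fix r :: real
    show "\<phi> (of_real r) = of_real r" using ph[of "of_real r" r 0] by (simp add: complex_of_real_def)
  next
    fix x
    have "norm x = sqrt ((fst (co x))^2 + (snd (co x))^2)" by (subst co[of x]) (rule gen_norm[OF w])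
    then show "norm (\<phi> x) = norm x" unfolding \<phi>_def by (simp add: norm_complex_def)
  qed
next
  case False
  have allr: "z \<in> \<real>" for z :: 'f
    using sqrt_minus_one[of z] False by blast
  define re where "re z = (SOME r. z = of_real r)" for z :: 'f
  have re: "z = of_real (re z)" for z
  proof -
    obtain r where "z = of_real r" using allr[of z] by (auto elim: Reals_cases)
    then show ?thesis unfolding re_def by (rule someI)
  qed
  have reu: "re (of_real r :: 'f) = r" for r
    using of_real_eq_iff[THEN iffD1, OF re[of "of_real r :: 'f"]] by (rule sym)
  have ex: "\<exists>a. z = of_real a" for z :: 'f using allr[of z] by (auto elim: Reals_cases)
  show ?thesis
  proof (intro exI[of _ "\<lambda>z. complex_of_real (re z)"] conjI allI)
    fix x y :: 'f
    obtain a b where ab: "x = of_real a" "y = of_real b" using ex[of x] ex[of y] by blast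
    have e: "x + y = of_real (a + b)" "x * y = of_real (a * b)" using ab by simp_all
    have "re (x + y) = a + b" by (subst e(1)) (rule reu)
    moreover have "re (x * y) = a * b" by (subst e(2)) (rule reu)
    moreover have "re x = a" "re y = b" using ab reu by simp_all
    ultimately show "complex_of_real (re (x + y)) = complex_of_real (re x) + complex_of_real (re y)"
      and "complex_of_real (re (x * y)) = complex_of_real (re x) * complex_of_real (re y)"
      by simp_all
  next
    fix r show "complex_of_real (re (of_real r :: 'f)) = complex_of_real r" using reu by simp
  next
    fix x :: 'f
    obtain a where "x = of_real a" using ex[of x] by blast
    then show "norm (complex_of_real (re x)) = norm x" by (simp add: reu)
  qed
qed

lemma orth_sumsq:
  fixes X :: "nat \<Rightarrow> nat \<Rightarrow> real" and x :: "nat \<Rightarrow> real"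
  assumes GS: "G \<subseteq> S2"
    and orth: "\<forall>j\<in>S2. \<forall>k\<in>S2. (\<Sum>i\<in>S1. X i j * X i k) = (if j = k then 1 else 0)"
  shows "(\<Sum>i\<in>S1. (\<Sum>j\<in>G. X i j * x j)^2) = (\<Sum>j\<in>G. (x j)^2)"
proof -
  have "(\<Sum>i\<in>S1. (\<Sum>j\<in>G. X i j * x j)^2) = (\<Sum>i\<in>S1. \<Sum>j\<in>G. \<Sum>k\<in>G. (X i j * X i k) * (x j * x k))"
    by (simp add: power2_eq_square sum_product algebra_simps)
  also have "\<dots> = (\<Sum>j\<in>G. \<Sum>i\<in>S1. \<Sum>k\<in>G. (X i j * X i k) * (x j * x k))"
    by (rule sum.swap)
  also have "\<dots> = (\<Sum>j\<in>G. \<Sum>k\<in>G. \<Sum>i\<in>S1. (X i j * X i k) * (x j * x k))"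
    by (rule sum.cong[OF refl], rule sum.swap)
  also have "\<dots> = (\<Sum>j\<in>G. \<Sum>k\<in>G. (\<Sum>i\<in>S1. X i j * X i k) * (x j * x k))"
    by (simp add: sum_distrib_right)
  also have "\<dots> = (\<Sum>j\<in>G. \<Sum>k\<in>G. (if j = k then 1 else 0) * (x j * x k))"
  proof (intro sum.cong refl)
    fix j k assume "j \<in> G" "k \<in> G"
    then have "j \<in> S2" "k \<in> S2" using GS by auto
    then show "(\<Sum>i\<in>S1. X i j * X i k) * (x j * x k) = (if j = k then 1 else 0) * (x j * x k)"
      using orth by simp
  qed
  also have "\<dots> = (\<Sum>j\<in>G. (x j)^2)"
  proof (cases "finite G")
    case True
    have "(if j = k then 1 else 0) * (x j * x k) = (if j = k then x j * x k else 0)" for j k :: nat by simp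
    then show ?thesis using True by (simp add: power2_eq_square sum.delta)
  next
    case False then show ?thesis by simp
  qed
  finally show ?thesis .
qed

lemma complex_bound:
  fixes X :: "nat \<Rightarrow> nat \<Rightarrow> real" and a b :: "nat \<Rightarrow> complex"
  assumes fin: "finite S1" "finite F1" "finite F2"
    and zero: "\<forall>i j. X i j \<noteq> 0 \<longrightarrow> i \<in> S1 \<and> j \<in> S2"
    and orth: "\<forall>j\<in>S2. \<forall>k\<in>S2. (\<Sum>i\<in>S1. X i j * X i k) = (if j = k then 1 else 0)"
  shows "(cmod (\<Sum>i\<in>F1. \<Sum>j\<in>F2. a i * of_real (X i j) * b j))^2 \<le> (\<Sum>i\<in>F1. (cmod (a i))^2) * (\<Sum>j\<in>F2. (cmod (b j))^2)"
proof -
  define G where "G = F2 \<inter> S2"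
  have GS: "G \<subseteq> S2" and finG: "finite G" unfolding G_def using fin by auto
  define w where "w i = (\<Sum>j\<in>G. of_real (X i j) * b j)" for i
  have inner: "(\<Sum>j\<in>F2. a i * of_real (X i j) * b j) = a i * w i" for i
  proof -
    have "(\<Sum>j\<in>F2. a i * of_real (X i j) * b j) = (\<Sum>j\<in>G. a i * of_real (X i j) * b j)"
      unfolding G_def using fin zero by (intro sum.mono_neutral_right) auto
    then show ?thesis unfolding w_def by (simp add: sum_distrib_left mult.assoc)
  qed
  have w0: "w i = 0" if "i \<notin> S1" for i unfolding w_def using zero that by (intro sum.neutral) auto
  have "cmod (\<Sum>i\<in>F1. a i * w i) \<le> (\<Sum>i\<in>F1. cmod (a i) * cmod (w i))"
    by (rule order_trans[OF norm_sum]) (simp add: norm_mult)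
  then have "(cmod (\<Sum>i\<in>F1. a i * w i))^2 \<le> (\<Sum>i\<in>F1. cmod (a i) * cmod (w i))^2"
    by (intro power_mono) auto
  also have "\<dots> \<le> (\<Sum>i\<in>F1. (cmod (a i))^2) * (\<Sum>i\<in>F1. (cmod (w i))^2)"
    by (rule Cauchy_Schwarz_ineq_sum)
  also have "(\<Sum>i\<in>F1. (cmod (w i))^2) \<le> (\<Sum>j\<in>F2. (cmod (b j))^2)"
  proof -
    have "(\<Sum>i\<in>F1. (cmod (w i))^2) = (\<Sum>i\<in>F1 \<inter> S1. (cmod (w i))^2)"
      using fin w0 by (intro sum.mono_neutral_right) auto
    also have "\<dots> \<le> (\<Sum>i\<in>S1. (cmod (w i))^2)"
      using fin by (intro sum_mono2) auto
    also have "\<dots> = (\<Sum>i\<in>S1. (\<Sum>j\<in>G. X i j * Re (b j))^2) + (\<Sum>i\<in>S1. (\<Sum>j\<in>G. X i j * Im (b j))^2)"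
      unfolding w_def cmod_power2 by (simp add: Re_sum Im_sum sum.distrib)
    also have "\<dots> = (\<Sum>j\<in>G. (Re (b j))^2) + (\<Sum>j\<in>G. (Im (b j))^2)"
      using orth_sumsq[OF GS orth] by simp
    also have "\<dots> = (\<Sum>j\<in>G. (cmod (b j))^2)" by (simp add: cmod_power2 sum.distrib)
    also have "\<dots> \<le> (\<Sum>j\<in>F2. (cmod (b j))^2)" unfolding G_def using fin by (intro sum_mono2) auto
    finally show ?thesis .
  qed
  then have "(\<Sum>i\<in>F1. (cmod (a i))^2) * (\<Sum>i\<in>F1. (cmod (w i))^2) \<le> (\<Sum>i\<in>F1. (cmod (a i))^2) * (\<Sum>j\<in>F2. (cmod (b j))^2)"
    by (intro mult_left_mono) (auto intro: sum_nonneg)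
  finally show ?thesis by (simp add: inner)
qed

lemma hom_sum:
  assumes add: "\<forall>x y. \<phi> (x + y) = \<phi> x + \<phi> y"
  shows "\<phi> (sum f A) = (\<Sum>a\<in>A. \<phi> (f a :: 'a::comm_monoid_add) :: 'b::cancel_comm_monoid_add)"
proof -
  have z: "\<phi> 0 = 0" using add[rule_format, of 0 0] by simp
  show ?thesis
  proof (cases "finite A")
    case True then show ?thesis by (induction A rule: finite_induct) (auto simp: z add)
  next
    case False then show ?thesis by (simp add: z)
  qed
qed

lemma f_bound:
  fixes X :: "nat \<Rightarrow> nat \<Rightarrow> real" and u v :: "nat \<Rightarrow> 'f::real_normed_field"
  assumes fin: "finite S1" "finite F1" "finite F2"
    and zero: "\<forall>i j. X i j \<noteq> 0 \<longrightarrow> i \<in> S1 \<and> j \<in> S2"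
    and orth: "\<forall>j\<in>S2. \<forall>k\<in>S2. (\<Sum>i\<in>S1. X i j * X i k) = (if j = k then 1 else 0)"
    and nu: "(\<Sum>i\<in>F1. (norm (u i))^2) \<le> 1" and nv: "(\<Sum>j\<in>F2. (norm (v j))^2) \<le> 1"
  shows "norm (\<Sum>i\<in>F1. \<Sum>j\<in>F2. u i * of_real (X i j) * v j) \<le> 1"
proof -
  obtain \<phi> :: "'f \<Rightarrow> complex" where ph: "\<forall>x y. \<phi> (x + y) = \<phi> x + \<phi> y" "\<forall>x y. \<phi> (x*y) = \<phi> x * \<phi> y"
     "\<forall>r. \<phi> (of_real r) = of_real r" "\<forall>x. norm (\<phi> x) = norm x"
    using embed_complex by blast
  have "\<phi> (\<Sum>i\<in>F1. \<Sum>j\<in>F2. u i * of_real (X i j) * v j) = (\<Sum>i\<in>F1. \<Sum>j\<in>F2. \<phi> (u i) * of_real (X i j) * \<phi> (v j))"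
    by (simp add: hom_sum[OF ph(1)] ph(2,3))
  then have "norm (\<Sum>i\<in>F1. \<Sum>j\<in>F2. u i * of_real (X i j) * v j) = cmod (\<Sum>i\<in>F1. \<Sum>j\<in>F2. \<phi> (u i) * of_real (X i j) * \<phi> (v j))"
    using ph(4) by metis
  moreover have "(cmod (\<Sum>i\<in>F1. \<Sum>j\<in>F2. \<phi> (u i) * of_real (X i j) * \<phi> (v j)))^2 \<le> (\<Sum>i\<in>F1. (cmod (\<phi> (u i)))^2) * (\<Sum>j\<in>F2. (cmod (\<phi> (v j)))^2)"
    by (rule complex_bound[OF fin zero orth])
  moreover have "(\<Sum>i\<in>F1. (cmod (\<phi> (u i)))^2) * (\<Sum>j\<in>F2. (cmod (\<phi> (v j)))^2) \<le> 1"
    using nu nv ph(4) by (simp add: mult_le_one sum_nonneg)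
  ultimately have "(norm (\<Sum>i\<in>F1. \<Sum>j\<in>F2. u i * of_real (X i j) * v j))^2 \<le> 1" by simp
  then show ?thesis by (simp add: power_le_one_iff abs_square_le_1)
qed

lemma op_norm_le1:
  fixes X :: "nat \<Rightarrow> nat \<Rightarrow> real"
  assumes fin: "finite S1"
    and zero: "\<forall>i j. X i j \<noteq> 0 \<longrightarrow> i \<in> S1 \<and> j \<in> S2"
    and orth: "\<forall>j\<in>S2. \<forall>k\<in>S2. (\<Sum>i\<in>S1. X i j * X i k) = (if j = k then 1 else 0)"
  shows "op_norm R C (\<lambda>i j. (of_real (X i j) :: 'f::real_normed_field)) \<le> 1"
  unfolding op_norm_def
  by (rule Sup_least) (auto intro!: f_bound[OF fin _ _ zero orth])

lemma op_norm_ge: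
  fixes A :: "nat \<Rightarrow> nat \<Rightarrow> 'f::real_normed_field"
  assumes "finite F1" "F1 \<subseteq> R" "finite F2" "F2 \<subseteq> C"
    "(\<Sum>i\<in>F1. (norm (u i))^2) \<le> 1" "(\<Sum>j\<in>F2. (norm (v j))^2) \<le> 1"
  shows "ereal (norm (\<Sum>i\<in>F1. \<Sum>j\<in>F2. u i * A i j * v j)) \<le> op_norm R C A"
  unfolding op_norm_def by (rule Sup_upper) (use assms in blast)

lemma schur_ge:
  fixes X :: "nat \<Rightarrow> nat \<Rightarrow> 'f::real_normed_field"
  assumes "op_norm R C X \<le> 1"
  shows "op_norm R C (\<lambda>i j. biadj G i j * X i j) \<le> schur_norm TYPE('f) R C G"
  unfolding schur_norm_def by (rule Sup_upper) (use assms in blast)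

lemma cert:
  fixes R C :: "nat set" and G :: "(nat \<times> nat) set" and \<rho> \<kappa> :: "nat \<Rightarrow> nat"
    and x :: "nat \<Rightarrow> nat \<Rightarrow> real" and u v :: "nat \<Rightarrow> real" and P :: "nat \<Rightarrow> nat \<Rightarrow> bool"
  assumes inj: "inj_on \<rho> {..<n}" "inj_on \<kappa> {..<m}"
    and RC: "\<rho> ` {..<n} \<subseteq> R" "\<kappa> ` {..<m} \<subseteq> C"
    and pat: "\<forall>k<n. \<forall>l<m. (\<rho> k, \<kappa> l) \<in> G \<longleftrightarrow> P k l"
    and orth: "\<forall>j<m. \<forall>k<m. (\<Sum>i<n. x i j * x i k) = (if j = k then 1 else 0)"
    and nu: "(\<Sum>i<n. (u i)^2) \<le> 1" and nv: "(\<Sum>j<m. (v j)^2) \<le> 1"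
    and val: "t \<le> (\<Sum>i<n. \<Sum>j<m. u i * (if P i j then x i j else 0) * v j)"
  shows "ereal t \<le> schur_norm TYPE('f::real_normed_field) R C G"
proof -
  define S1 where "S1 = \<rho> ` {..<n}"
  define S2 where "S2 = \<kappa> ` {..<m}"
  define ir where "ir = inv_into {..<n} \<rho>"
  define ic where "ic = inv_into {..<m} \<kappa>"
  have irr: "ir (\<rho> k) = k" if "k < n" for k unfolding ir_def using inj(1) that by simp
  have icc: "ic (\<kappa> k) = k" if "k < m" for k unfolding ic_def using inj(2) that by simp
  define X where "X i j = (if i \<in> S1 \<and> j \<in> S2 then x (ir i) (ic j) else 0)" for i j
  have fin: "finite S1" unfolding S1_def by simp
  have zero: "\<forall>i j. X i j \<noteq> 0 \<longrightarrow> i \<in> S1 \<and> j \<in> S2" unfolding X_def by auto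
  have orth2: "\<forall>j\<in>S2. \<forall>k\<in>S2. (\<Sum>i\<in>S1. X i j * X i k) = (if j = k then 1 else 0)"
  proof (intro ballI)
    fix j k assume jk: "j \<in> S2" "k \<in> S2"
    then obtain j' k' where j': "j' < m" "j = \<kappa> j'" and k': "k' < m" "k = \<kappa> k'" unfolding S2_def by auto
    have "(\<Sum>i\<in>S1. X i j * X i k) = (\<Sum>i<n. X (\<rho> i) j * X (\<rho> i) k)"
      unfolding S1_def using inj(1) by (simp add: sum.reindex)
    also have "\<dots> = (\<Sum>i<n. x i j' * x i k')"
      by (rule sum.cong) (auto simp: X_def S1_def irr icc j' k' jk[unfolded j' k'])
    also have "\<dots> = (if j' = k' then 1 else 0)" using orth j' k' by simp
    also have "\<dots> = (if j = k then 1 else 0)" using inj(2) j' k' by (auto dest: inj_onD)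
    finally show "(\<Sum>i\<in>S1. X i j * X i k) = (if j = k then 1 else 0)" .
  qed
  define Xf where "Xf i j = (of_real (X i j) :: 'f)" for i j
  have on: "op_norm R C Xf \<le> 1" unfolding Xf_def by (rule op_norm_le1[OF fin zero orth2])
  define U where "U i = (of_real (u (ir i)) :: 'f)" for i
  define V where "V j = (of_real (v (ic j)) :: 'f)" for j
  have nU: "(\<Sum>i\<in>S1. (norm (U i))^2) \<le> 1"
  proof -
    have "(\<Sum>i\<in>S1. (norm (U i))^2) = (\<Sum>i<n. (norm (U (\<rho> i)))^2)" unfolding S1_def using inj(1) by (simp add: sum.reindex)
    also have "\<dots> = (\<Sum>i<n. (u i)^2)" by (rule sum.cong) (auto simp: U_def irr)
    finally show ?thesis using nu by simp
  qed
  have nV: "(\<Sum>j\<in>S2. (norm (V j))^2) \<le> 1"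
  proof -
    have "(\<Sum>j\<in>S2. (norm (V j))^2) = (\<Sum>j<m. (norm (V (\<kappa> j)))^2)" unfolding S2_def using inj(2) by (simp add: sum.reindex)
    also have "\<dots> = (\<Sum>j<m. (v j)^2)" by (rule sum.cong) (auto simp: V_def icc)
    finally show ?thesis using nv by simp
  qed
  have "(\<Sum>i\<in>S1. \<Sum>j\<in>S2. U i * (biadj G i j * Xf i j) * V j)
      = (\<Sum>i<n. \<Sum>j<m. U (\<rho> i) * (biadj G (\<rho> i) (\<kappa> j) * Xf (\<rho> i) (\<kappa> j)) * V (\<kappa> j))"
    unfolding S1_def S2_def using inj by (simp add: sum.reindex)
  also have "\<dots> = (\<Sum>i<n. \<Sum>j<m. of_real (u i * (if P i j then x i j else 0) * v j))"
    by (intro sum.cong refl) (auto simp: U_def V_def Xf_def X_def biadj_def S1_def S2_def irr icc pat)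
  also have "\<dots> = of_real (\<Sum>i<n. \<Sum>j<m. u i * (if P i j then x i j else 0) * v j)" by simp
  finally have eq: "(\<Sum>i\<in>S1. \<Sum>j\<in>S2. U i * (biadj G i j * Xf i j) * V j) = of_real (\<Sum>i<n. \<Sum>j<m. u i * (if P i j then x i j else 0) * v j)" .
  have "t \<le> \<bar>\<Sum>i<n. \<Sum>j<m. u i * (if P i j then x i j else 0) * v j\<bar>" using val by linarith
  then have "ereal t \<le> ereal (norm (\<Sum>i\<in>S1. \<Sum>j\<in>S2. U i * (biadj G i j * Xf i j) * V j))"
    unfolding eq norm_of_real by simp
  also have "\<dots> \<le> op_norm R C (\<lambda>i j. biadj G i j * Xf i j)"
    by (rule op_norm_ge) (use fin RC nU nV in \<open>auto simp: S1_def S2_def\<close>)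
  also have "\<dots> \<le> schur_norm TYPE('f) R C G" by (rule schur_ge[OF on])
  finally show ?thesis .
qed

lemma householder:
  fixes f :: "nat \<Rightarrow> real"
  assumes N: "N = (\<Sum>i<n. (f i)^2)" "N \<noteq> 0"
  shows "\<forall>j<n. \<forall>k<n. (\<Sum>i<n. ((if i = j then 1 else 0) - 2 * f i * f j / N) * ((if i = k then 1 else 0) - 2 * f i * f k / N)) = (if j = k then 1 else 0)"
proof (intro allI impI)
  fix j k assume jk: "j < n" "k < n"
  have d: "(\<Sum>i<n. (if i = a then 1 else 0) * g i) = (g a :: real)" if "a < n" for a g
  proof -
    have "(\<Sum>i<n. (if i = a then 1 else 0) * g i) = (\<Sum>i<n. (if i = a then g i else 0))"
      by (intro sum.cong) auto
    then show ?thesis using that by (simp add: sum.delta)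
  qed
  define p where "p i = 2 * f i * f j / N" for i
  define q where "q i = 2 * f i * f k / N" for i
  have "(\<Sum>i<n. ((if i = j then 1 else 0) - 2 * f i * f j / N) * ((if i = k then 1 else 0) - 2 * f i * f k / N))
    = (\<Sum>i<n. ((if i = j then 1 else 0) * (if i = k then 1 else 0) - (if i = j then 1 else 0) * q i
         - (if i = k then 1 else 0) * p i + (f i)^2 * (4 * f j * f k / N^2)))"
    by (intro sum.cong refl) (simp add: p_def q_def algebra_simps power2_eq_square)
  also have "\<dots> = (\<Sum>i<n. (if i = j then 1 else 0) * (if i = k then 1 else 0)) - (\<Sum>i<n. (if i = j then 1 else 0) * q i)
         - (\<Sum>i<n. (if i = k then 1 else 0) * p i) + (\<Sum>i<n. (f i)^2) * (4 * f j * f k / N^2)"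
    by (simp add: sum.distrib sum_subtractf sum_distrib_right sum_divide_distrib)
  also have "\<dots> = (if j = k then 1 else 0) - q j - p k + N * (4 * f j * f k / N^2)"
    using d[OF jk(1), of "\<lambda>i. if i = k then 1 else 0"] d[OF jk(1), of q] d[OF jk(2), of p] N(1) by simp
  also have "\<dots> = (if j = k then 1 else 0)" using N(2) by (simp add: p_def q_def power2_eq_square field_simps)
  finally show "(\<Sum>i<n. ((if i = j then 1 else 0) - 2 * f i * f j / N) * ((if i = k then 1 else 0) - 2 * f i * f k / N)) = (if j = k then 1 else 0)" .
qed

definition t0 :: real where "t0 = (9 + 4 * sqrt 6) / 15"

lemma all3: "(\<forall>k<(3::nat). Q k) \<longleftrightarrow> Q 0 \<and> Q 1 \<and> Q 2"
  by (auto simp: numeral_3_eq_3 numeral_2_eq_2 less_Suc_eq)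

lemma sum3: "(\<Sum>k<(3::nat). g k) = g 0 + g 1 + g 2"
  by (simp add: numeral_3_eq_3 numeral_2_eq_2)

definition sT :: real where "sT = sqrt 6"
definition aT :: real where "aT = sqrt ((6 + sT)/30)"
definition bT :: real where "bT = sqrt ((8 + 3* sT)/30)"
definition cT :: real where "cT = sqrt ((8 - 2* sT)/15)"
definition fT :: "nat \<Rightarrow> real" where "fT i = (if i = 0 then -2*aT else if i = 1 then 2*bT else -(2+sT)*cT)"
definition NT :: real where "NT = (\<Sum>i<3. (fT i)^2)"
definition uT :: "nat \<Rightarrow> real" where "uT i = (if i = 0 then aT else if i = 1 then bT else cT)"
definition PT :: "nat \<Rightarrow> nat \<Rightarrow> bool" where "PT i j = ((i,j) \<in> {(0,0),(0,1),(1,0),(1,1),(1,2),(2,1)})"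
definition xT :: "nat \<Rightarrow> nat \<Rightarrow> real" where "xT i j = (if i = j then 1 else 0) - 2 * fT i * fT j / NT"

lemma T_facts:
  shows "NT \<noteq> 0" and "(\<Sum>i<3. (uT i)^2) \<le> 1" and
    "(\<Sum>i<3. \<Sum>j<3. uT i * (if PT i j then xT i j else 0) * uT j) = t0"
proof -
  let ?s = sT and ?a = aT and ?b = bT and ?c = cT
  have s2: "sT* sT = 6" unfolding sT_def by simp
  have s0: "sT > 2" unfolding sT_def by (rule real_less_rsqrt) simp
  have s3: "sT < 3" unfolding sT_def by (rule real_less_lsqrt) simp_all
  have A: "aT*aT = (6 + sT)/30" unfolding aT_def using s0 by simp
  have B: "bT*bT = (8 + 3* sT)/30" unfolding bT_def using s0 by simp
  have C: "cT*cT = (8 - 2* sT)/15" unfolding cT_def using s3 by simp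
  have NN: "NT = (12 + 4* sT)/3"
  proof -
    have "NT = 4*(aT*aT) + 4*(bT*bT) + (4 + 4* sT + sT* sT)*(cT*cT)" unfolding NT_def fT_def sum3 by (simp add: power2_eq_square algebra_simps)
    also have "\<dots> = (12 + 4* sT)/3" unfolding A B C s2 by (simp add: field_simps) (simp add: algebra_simps s2)?
    finally show ?thesis .
  qed
  then show "NT \<noteq> 0" using s0 by simp
  have "(\<Sum>i<3. (uT i)^2) = aT*aT + bT*bT + cT*cT" unfolding sum3 uT_def by (simp add: power2_eq_square)
  moreover have "aT*aT + bT*bT + cT*cT = 1" unfolding A B C by (simp add: field_simps)
  ultimately show "(\<Sum>i<3. (uT i)^2) \<le> 1" by simp
  have "(\<Sum>i<3. \<Sum>j<3. uT i * (if PT i j then xT i j else 0) * uT j)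
      = aT*aT + bT*bT - 2/NT * (4*(aT*aT)*(aT*aT) - 8*(aT*aT)*(bT*bT) + 4*(bT*bT)*(bT*bT) - 4*(2+sT)*(bT*bT)*(cT*cT))"
    unfolding sum3 uT_def PT_def xT_def fT_def by (simp add: algebra_simps diff_divide_distrib add_divide_distrib)
  also have "\<dots> = t0"
  proof -
    have Q: "4*((6 + sT)/30)*((6 + sT)/30) - 8*((6 + sT)/30)*((8 + 3 * sT)/30) + 4*((8 + 3 * sT)/30)*((8 + 3 * sT)/30)
       - 4*(2+sT)*((8 + 3 * sT)/30)*((8 - 2 * sT)/15) = -(6+2* sT)*(2+2* sT)/45"
      using s2 by (simp add: field_simps; algebra)
    have H2: "2/NT * (-(6+2* sT)*(2+2* sT)/45) = -(2+2* sT)/15" unfolding NN using s0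
      by (simp add: field_simps)
    have "aT*aT + bT*bT - 2/NT * (4*(aT*aT)*(aT*aT) - 8*(aT*aT)*(bT*bT) + 4*(bT*bT)*(bT*bT) - 4*(2+sT)*(bT*bT)*(cT*cT))
       = (6 + sT)/30 + (8 + 3 * sT)/30 - (-(2+2 * sT)/15)" by (simp only: A B C Q H2)
    also have "\<dots> = t0" unfolding t0_def sT_def[symmetric] by (simp add: field_simps)
    finally show ?thesis .
  qed
  finally show "(\<Sum>i<3. \<Sum>j<3. uT i * (if PT i j then xT i j else 0) * uT j) = t0" .
qed

lemma sum4: "(\<Sum>k<(4::nat). g k) = g 0 + g 1 + g 2 + g 3"
  by (simp add: numeral_3_eq_3 numeral_2_eq_2 eval_nat_numeral)

lemma all4: "(\<forall>k<(4::nat). Q k) \<longleftrightarrow> Q 0 \<and> Q 1 \<and> Q 2 \<and> Q 3"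
  by (auto simp: eval_nat_numeral less_Suc_eq)

lemma t0_le: "t0 \<le> 94/75"
proof -
  have "sqrt 6 \<le> sqrt ((49/20)^2)" by (intro real_sqrt_le_mono) (simp add: power2_eq_square)
  then have "sqrt 6 \<le> 49/20" by simp
  then show ?thesis unfolding t0_def by simp
qed

lemma cert_list:
  fixes rs cs :: "nat list" and xs :: "real list list" and us vs :: "real list" and ps :: "bool list list"
  assumes "distinct rs" "distinct cs" "set rs \<subseteq> R" "set cs \<subseteq> C"
   "\<forall>k<length rs. \<forall>l<length cs. (rs!k, cs!l) \<in> G \<longleftrightarrow> ps!k!l"
   "\<forall>j<length cs. \<forall>k<length cs. (\<Sum>i<length rs. xs!i!j * xs!i!k) = (if j = k then 1 else 0)"
   "(\<Sum>i<length rs. (us!i)^2) \<le> 1" "(\<Sum>j<length cs. (vs!j)^2) \<le> 1"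
   "t \<le> (\<Sum>i<length rs. \<Sum>j<length cs. us!i * (if ps!i!j then xs!i!j else 0) * vs!j)"
  shows "ereal t \<le> schur_norm TYPE('f::real_normed_field) R C G"
proof (rule cert[where \<rho>="(!) rs" and \<kappa>="(!) cs" and x="\<lambda>i j. xs!i!j" and u="(!) us" and v="(!) vs" and P="\<lambda>i j. ps!i!j"])
  show "inj_on ((!) rs) {..<length rs}" "inj_on ((!) cs) {..<length cs}" using assms(1,2) by (auto intro: inj_on_nth)
  show "(!) rs ` {..<length rs} \<subseteq> R" "(!) cs ` {..<length cs} \<subseteq> C" using assms(3,4) by auto
qed (use assms in auto)

lemma certT:
  fixes G :: "(nat \<times> nat) set"
  assumes "distinct [r0,r1,r2]" "distinct [c0,c1,c2]" "{r0,r1,r2} \<subseteq> R" "{c0,c1,c2} \<subseteq> C"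
    "(r0,c0) \<in> G" "(r0,c1) \<in> G" "(r0,c2) \<notin> G"
    "(r1,c0) \<in> G" "(r1,c1) \<in> G" "(r1,c2) \<in> G"
    "(r2,c0) \<notin> G" "(r2,c1) \<in> G" "(r2,c2) \<notin> G"
  shows "ereal t0 \<le> schur_norm TYPE('f::real_normed_field) R C G"
proof (rule cert[where \<rho>="(!) [r0,r1,r2]" and \<kappa>="(!) [c0,c1,c2]" and n=3 and m=3 and x=xT and u=uT and v=uT and P=PT])
  show "inj_on ((!) [r0,r1,r2]) {..<3}" "inj_on ((!) [c0,c1,c2]) {..<3}"
    using assms(1,2) by (auto intro!: inj_on_nth)
  show "(!) [r0,r1,r2] ` {..<3} \<subseteq> R" "(!) [c0,c1,c2] ` {..<3} \<subseteq> C"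
    using assms(3,4) by (auto simp: numeral_3_eq_3 less_Suc_eq)
  show "\<forall>k<3. \<forall>l<3. ([r0,r1,r2] ! k, [c0,c1,c2] ! l) \<in> G \<longleftrightarrow> PT k l"
    unfolding all3 PT_def using assms(5-13) by simp
  show "\<forall>j<3. \<forall>k<3. (\<Sum>i<3. xT i j * xT i k) = (if j = k then 1 else 0)"
    using householder[OF NT_def[unfolded fT_def[symmetric]] T_facts(1)] unfolding xT_def by simp
  show "(\<Sum>i<3. (uT i)^2) \<le> 1" "(\<Sum>i<3. (uT i)^2) \<le> 1" by (rule T_facts(2))+
  show "t0 \<le> (\<Sum>i<3. \<Sum>j<3. uT i * (if PT i j then xT i j else 0) * uT j)" using T_facts(3) by simp
qed

lemma len3: "length [a,b,c] = 3" by simp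
lemma len4: "length [a,b,c,d] = 4" by simp

lemma certA:
  fixes G :: "(nat \<times> nat) set"
  assumes "distinct [r0,r1,r2]" "distinct [c0,c1,c2]" "{r0,r1,r2} \<subseteq> R" "{c0,c1,c2} \<subseteq> C"
    "(r0,c0) \<in> G" "(r0,c1) \<in> G" "(r0,c2) \<notin> G" "(r1,c0) \<in> G" "(r1,c1) \<in> G" "(r1,c2) \<in> G" "(r2,c0) \<in> G" "(r2,c1) \<notin> G" "(r2,c2) \<in> G"
  shows "ereal t0 \<le> schur_norm TYPE('f::real_normed_field) R C G"
proof (rule cert_list[where rs="[r0,r1,r2]" and cs="[c0,c1,c2]" and xs="([[(99/133), (52/133), (-72/133)], [(12/133), (99/133), (88/133)], [(88/133), (-72/133), (69/133)]]::real list list)" and us="([(53/100), (13/20), (53/100)]::real list)" and vs="([(13/20), (53/100), (53/100)]::real list)" and ps="[[True, True, False], [True, True, True], [True, False, True]]"])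
  show "\<forall>k<length [r0,r1,r2]. \<forall>l<length [c0,c1,c2]. ([r0,r1,r2] ! k, [c0,c1,c2] ! l) \<in> G \<longleftrightarrow> [[True, True, False], [True, True, True], [True, False, True]] ! k ! l"
    unfolding len3 len4 all3 all3 using assms by simp
  show "\<forall>j<length [c0,c1,c2]. \<forall>k<length [c0,c1,c2]. (\<Sum>i<length [r0,r1,r2]. ([[(99/133), (52/133), (-72/133)], [(12/133), (99/133), (88/133)], [(88/133), (-72/133), (69/133)]]::real list list) ! i ! j * ([[(99/133), (52/133), (-72/133)], [(12/133), (99/133), (88/133)], [(88/133), (-72/133), (69/133)]]::real list list) ! i ! k) = (if j = k then 1 else 0)"
    unfolding len3 len4 all3 all3 sum3 by simp
  show "(\<Sum>i<length [r0,r1,r2]. (([(53/100), (13/20), (53/100)]::real list) ! i)^2) \<le> 1" unfolding len3 len4 sum3 by (simp add: power2_eq_square)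
  show "(\<Sum>j<length [c0,c1,c2]. (([(13/20), (53/100), (53/100)]::real list) ! j)^2) \<le> 1" unfolding len3 len4 sum3 by (simp add: power2_eq_square)
  have "94/75 \<le> (\<Sum>i<length [r0,r1,r2]. \<Sum>j<length [c0,c1,c2]. ([(53/100), (13/20), (53/100)]::real list) ! i * (if [[True, True, False], [True, True, True], [True, False, True]] ! i ! j then ([[(99/133), (52/133), (-72/133)], [(12/133), (99/133), (88/133)], [(88/133), (-72/133), (69/133)]]::real list list) ! i ! j else 0) * ([(13/20), (53/100), (53/100)]::real list) ! j)"
    unfolding len3 len4 sum3 sum3 by simp
  then show "t0 \<le> (\<Sum>i<length [r0,r1,r2]. \<Sum>j<length [c0,c1,c2]. ([(53/100), (13/20), (53/100)]::real list) ! i * (if [[True, True, False], [True, True, True], [True, False, True]] ! i ! j then ([[(99/133), (52/133), (-72/133)], [(12/133), (99/133), (88/133)], [(88/133), (-72/133), (69/133)]]::real list list) ! i ! j else 0) * ([(13/20), (53/100), (53/100)]::real list) ! j)"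
    using t0_le by linarith
qed (use assms in auto)

lemma certAt:
  fixes G :: "(nat \<times> nat) set"
  assumes "distinct [r0,r1,r2]" "distinct [c0,c1,c2]" "{r0,r1,r2} \<subseteq> R" "{c0,c1,c2} \<subseteq> C"
    "(r0,c0) \<in> G" "(r0,c1) \<in> G" "(r0,c2) \<in> G" "(r1,c0) \<in> G" "(r1,c1) \<in> G" "(r1,c2) \<notin> G" "(r2,c0) \<notin> G" "(r2,c1) \<in> G" "(r2,c2) \<in> G"
  shows "ereal t0 \<le> schur_norm TYPE('f::real_normed_field) R C G"
proof (rule cert_list[where rs="[r0,r1,r2]" and cs="[c0,c1,c2]" and xs="([[(99/133), (12/133), (88/133)], [(52/133), (99/133), (-72/133)], [(-72/133), (88/133), (69/133)]]::real list list)" and us="([(13/20), (53/100), (53/100)]::real list)" and vs="([(53/100), (13/20), (53/100)]::real list)" and ps="[[True, True, True], [True, True, False], [False, True, True]]"])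
  show "\<forall>k<length [r0,r1,r2]. \<forall>l<length [c0,c1,c2]. ([r0,r1,r2] ! k, [c0,c1,c2] ! l) \<in> G \<longleftrightarrow> [[True, True, True], [True, True, False], [False, True, True]] ! k ! l"
    unfolding len3 len4 all3 all3 using assms by simp
  show "\<forall>j<length [c0,c1,c2]. \<forall>k<length [c0,c1,c2]. (\<Sum>i<length [r0,r1,r2]. ([[(99/133), (12/133), (88/133)], [(52/133), (99/133), (-72/133)], [(-72/133), (88/133), (69/133)]]::real list list) ! i ! j * ([[(99/133), (12/133), (88/133)], [(52/133), (99/133), (-72/133)], [(-72/133), (88/133), (69/133)]]::real list list) ! i ! k) = (if j = k then 1 else 0)"
    unfolding len3 len4 all3 all3 sum3 by simp
  show "(\<Sum>i<length [r0,r1,r2]. (([(13/20), (53/100), (53/100)]::real list) ! i)^2) \<le> 1" unfolding len3 len4 sum3 by (simp add: power2_eq_square)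
  show "(\<Sum>j<length [c0,c1,c2]. (([(53/100), (13/20), (53/100)]::real list) ! j)^2) \<le> 1" unfolding len3 len4 sum3 by (simp add: power2_eq_square)
  have "94/75 \<le> (\<Sum>i<length [r0,r1,r2]. \<Sum>j<length [c0,c1,c2]. ([(13/20), (53/100), (53/100)]::real list) ! i * (if [[True, True, True], [True, True, False], [False, True, True]] ! i ! j then ([[(99/133), (12/133), (88/133)], [(52/133), (99/133), (-72/133)], [(-72/133), (88/133), (69/133)]]::real list list) ! i ! j else 0) * ([(53/100), (13/20), (53/100)]::real list) ! j)"
    unfolding len3 len4 sum3 sum3 by simp
  then show "t0 \<le> (\<Sum>i<length [r0,r1,r2]. \<Sum>j<length [c0,c1,c2]. ([(13/20), (53/100), (53/100)]::real list) ! i * (if [[True, True, True], [True, True, False], [False, True, True]] ! i ! j then ([[(99/133), (12/133), (88/133)], [(52/133), (99/133), (-72/133)], [(-72/133), (88/133), (69/133)]]::real list list) ! i ! j else 0) * ([(53/100), (13/20), (53/100)]::real list) ! j)"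
    using t0_le by linarith
qed (use assms in auto)

lemma certK:
  fixes G :: "(nat \<times> nat) set"
  assumes "distinct [r0,r1,r2,r3]" "distinct [c0,c1,c2,c3]" "{r0,r1,r2,r3} \<subseteq> R" "{c0,c1,c2,c3} \<subseteq> C"
    "(r0,c0) \<in> G" "(r0,c1) \<in> G" "(r0,c2) \<in> G" "(r0,c3) \<in> G" "(r1,c0) \<in> G" "(r1,c1) \<notin> G" "(r1,c2) \<notin> G" "(r1,c3) \<notin> G" "(r2,c0) \<notin> G" "(r2,c1) \<in> G" "(r2,c2) \<notin> G" "(r2,c3) \<notin> G" "(r3,c0) \<notin> G" "(r3,c1) \<notin> G" "(r3,c2) \<in> G" "(r3,c3) \<notin> G"
  shows "ereal t0 \<le> schur_norm TYPE('f::real_normed_field) R C G"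
proof (rule cert_list[where rs="[r0,r1,r2,r3]" and cs="[c0,c1,c2,c3]" and xs="([[(1/2), (1/2), (1/2), (1/2)], [(5/6), (-1/6), (-1/6), (-1/2)], [(-1/6), (5/6), (-1/6), (-1/2)], [(-1/6), (-1/6), (5/6), (-1/2)]]::real list list)" and us="([(387/500), (73/200), (73/200), (73/200)]::real list)" and vs="([(1367/2500), (1367/2500), (1367/2500), (8/25)]::real list)" and ps="[[True, True, True, True], [True, False, False, False], [False, True, False, False], [False, False, True, False]]"])
  show "\<forall>k<length [r0,r1,r2,r3]. \<forall>l<length [c0,c1,c2,c3]. ([r0,r1,r2,r3] ! k, [c0,c1,c2,c3] ! l) \<in> G \<longleftrightarrow> [[True, True, True, True], [True, False, False, False], [False, True, False, False], [False, False, True, False]] ! k ! l"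
    unfolding len3 len4 all4 all4 using assms by simp
  show "\<forall>j<length [c0,c1,c2,c3]. \<forall>k<length [c0,c1,c2,c3]. (\<Sum>i<length [r0,r1,r2,r3]. ([[(1/2), (1/2), (1/2), (1/2)], [(5/6), (-1/6), (-1/6), (-1/2)], [(-1/6), (5/6), (-1/6), (-1/2)], [(-1/6), (-1/6), (5/6), (-1/2)]]::real list list) ! i ! j * ([[(1/2), (1/2), (1/2), (1/2)], [(5/6), (-1/6), (-1/6), (-1/2)], [(-1/6), (5/6), (-1/6), (-1/2)], [(-1/6), (-1/6), (5/6), (-1/2)]]::real list list) ! i ! k) = (if j = k then 1 else 0)"
    unfolding len3 len4 all4 all4 sum4 by simp
  show "(\<Sum>i<length [r0,r1,r2,r3]. (([(387/500), (73/200), (73/200), (73/200)]::real list) ! i)^2) \<le> 1" unfolding len3 len4 sum4 by (simp add: power2_eq_square)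
  show "(\<Sum>j<length [c0,c1,c2,c3]. (([(1367/2500), (1367/2500), (1367/2500), (8/25)]::real list) ! j)^2) \<le> 1" unfolding len3 len4 sum4 by (simp add: power2_eq_square)
  have "94/75 \<le> (\<Sum>i<length [r0,r1,r2,r3]. \<Sum>j<length [c0,c1,c2,c3]. ([(387/500), (73/200), (73/200), (73/200)]::real list) ! i * (if [[True, True, True, True], [True, False, False, False], [False, True, False, False], [False, False, True, False]] ! i ! j then ([[(1/2), (1/2), (1/2), (1/2)], [(5/6), (-1/6), (-1/6), (-1/2)], [(-1/6), (5/6), (-1/6), (-1/2)], [(-1/6), (-1/6), (5/6), (-1/2)]]::real list list) ! i ! j else 0) * ([(1367/2500), (1367/2500), (1367/2500), (8/25)]::real list) ! j)"
    unfolding len3 len4 sum4 sum4 by simp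
  then show "t0 \<le> (\<Sum>i<length [r0,r1,r2,r3]. \<Sum>j<length [c0,c1,c2,c3]. ([(387/500), (73/200), (73/200), (73/200)]::real list) ! i * (if [[True, True, True, True], [True, False, False, False], [False, True, False, False], [False, False, True, False]] ! i ! j then ([[(1/2), (1/2), (1/2), (1/2)], [(5/6), (-1/6), (-1/6), (-1/2)], [(-1/6), (5/6), (-1/6), (-1/2)], [(-1/6), (-1/6), (5/6), (-1/2)]]::real list list) ! i ! j else 0) * ([(1367/2500), (1367/2500), (1367/2500), (8/25)]::real list) ! j)"
    using t0_le by linarith
qed (use assms in auto)

lemma certKt:
  fixes G :: "(nat \<times> nat) set"
  assumes "distinct [r0,r1,r2,r3]" "distinct [c0,c1,c2,c3]" "{r0,r1,r2,r3} \<subseteq> R" "{c0,c1,c2,c3} \<subseteq> C"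
    "(r0,c0) \<in> G" "(r0,c1) \<in> G" "(r0,c2) \<notin> G" "(r0,c3) \<notin> G" "(r1,c0) \<in> G" "(r1,c1) \<notin> G" "(r1,c2) \<in> G" "(r1,c3) \<notin> G" "(r2,c0) \<in> G" "(r2,c1) \<notin> G" "(r2,c2) \<notin> G" "(r2,c3) \<in> G" "(r3,c0) \<in> G" "(r3,c1) \<notin> G" "(r3,c2) \<notin> G" "(r3,c3) \<notin> G"
  shows "ereal t0 \<le> schur_norm TYPE('f::real_normed_field) R C G"
proof (rule cert_list[where rs="[r0,r1,r2,r3]" and cs="[c0,c1,c2,c3]" and xs="([[(1/2), (5/6), (-1/6), (-1/6)], [(1/2), (-1/6), (5/6), (-1/6)], [(1/2), (-1/6), (-1/6), (5/6)], [(1/2), (-1/2), (-1/2), (-1/2)]]::real list list)" and us="([(1367/2500), (1367/2500), (1367/2500), (8/25)]::real list)" and vs="([(387/500), (73/200), (73/200), (73/200)]::real list)" and ps="[[True, True, False, False], [True, False, True, False], [True, False, False, True], [True, False, False, False]]"])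
  show "\<forall>k<length [r0,r1,r2,r3]. \<forall>l<length [c0,c1,c2,c3]. ([r0,r1,r2,r3] ! k, [c0,c1,c2,c3] ! l) \<in> G \<longleftrightarrow> [[True, True, False, False], [True, False, True, False], [True, False, False, True], [True, False, False, False]] ! k ! l"
    unfolding len3 len4 all4 all4 using assms by simp
  show "\<forall>j<length [c0,c1,c2,c3]. \<forall>k<length [c0,c1,c2,c3]. (\<Sum>i<length [r0,r1,r2,r3]. ([[(1/2), (5/6), (-1/6), (-1/6)], [(1/2), (-1/6), (5/6), (-1/6)], [(1/2), (-1/6), (-1/6), (5/6)], [(1/2), (-1/2), (-1/2), (-1/2)]]::real list list) ! i ! j * ([[(1/2), (5/6), (-1/6), (-1/6)], [(1/2), (-1/6), (5/6), (-1/6)], [(1/2), (-1/6), (-1/6), (5/6)], [(1/2), (-1/2), (-1/2), (-1/2)]]::real list list) ! i ! k) = (if j = k then 1 else 0)"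
    unfolding len3 len4 all4 all4 sum4 by simp
  show "(\<Sum>i<length [r0,r1,r2,r3]. (([(1367/2500), (1367/2500), (1367/2500), (8/25)]::real list) ! i)^2) \<le> 1" unfolding len3 len4 sum4 by (simp add: power2_eq_square)
  show "(\<Sum>j<length [c0,c1,c2,c3]. (([(387/500), (73/200), (73/200), (73/200)]::real list) ! j)^2) \<le> 1" unfolding len3 len4 sum4 by (simp add: power2_eq_square)
  have "94/75 \<le> (\<Sum>i<length [r0,r1,r2,r3]. \<Sum>j<length [c0,c1,c2,c3]. ([(1367/2500), (1367/2500), (1367/2500), (8/25)]::real list) ! i * (if [[True, True, False, False], [True, False, True, False], [True, False, False, True], [True, False, False, False]] ! i ! j then ([[(1/2), (5/6), (-1/6), (-1/6)], [(1/2), (-1/6), (5/6), (-1/6)], [(1/2), (-1/6), (-1/6), (5/6)], [(1/2), (-1/2), (-1/2), (-1/2)]]::real list list) ! i ! j else 0) * ([(387/500), (73/200), (73/200), (73/200)]::real list) ! j)"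
    unfolding len3 len4 sum4 sum4 by simp
  then show "t0 \<le> (\<Sum>i<length [r0,r1,r2,r3]. \<Sum>j<length [c0,c1,c2,c3]. ([(1367/2500), (1367/2500), (1367/2500), (8/25)]::real list) ! i * (if [[True, True, False, False], [True, False, True, False], [True, False, False, True], [True, False, False, False]] ! i ! j then ([[(1/2), (5/6), (-1/6), (-1/6)], [(1/2), (-1/6), (5/6), (-1/6)], [(1/2), (-1/6), (-1/6), (5/6)], [(1/2), (-1/2), (-1/2), (-1/2)]]::real list list) ! i ! j else 0) * ([(387/500), (73/200), (73/200), (73/200)]::real list) ! j)"
    using t0_le by linarith
qed (use assms in auto)

definition trG :: "(nat \<times> nat) set \<Rightarrow> (nat \<times> nat) set" where
  "trG G = {(c, r). (r, c) \<in> G}"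

lemma trG_mem[simp]: "(a, b) \<in> trG G \<longleftrightarrow> (b, a) \<in> G" unfolding trG_def by simp

lemma op_norm_tr_le:
  "op_norm C R (\<lambda>i j. A j i) \<le> op_norm R C (A :: nat \<Rightarrow> nat \<Rightarrow> 'f::real_normed_field)"
proof -
  have sw: "(\<Sum>i\<in>F1. \<Sum>j\<in>F2. u i * A j i * v j) = (\<Sum>j\<in>F2. \<Sum>i\<in>F1. v j * A j i * u i)" for F1 F2 and u v :: "nat \<Rightarrow> 'f"
    by (subst sum.swap) (simp add: mult.commute mult.left_commute)
  { fix F1 F2 and u v :: "nat \<Rightarrow> 'f" assume h: "finite F1" "F1 \<subseteq> C" "finite F2" "F2 \<subseteq> R"
      "(\<Sum>i\<in>F1. (norm (u i))^2) \<le> 1" "(\<Sum>j\<in>F2. (norm (v j :: 'f))^2) \<le> 1"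
    have "ereal (norm (\<Sum>i\<in>F1. \<Sum>j\<in>F2. u i * A j i * v j)) \<le> op_norm R C A"
      unfolding sw by (rule op_norm_ge) (use h in auto) }
  then show ?thesis unfolding op_norm_def[of C R] by (intro Sup_least) blast
qed

lemma op_norm_transpose:
  "op_norm C R (\<lambda>i j. A j i) = op_norm R C (A :: nat \<Rightarrow> nat \<Rightarrow> 'f::real_normed_field)"
  using op_norm_tr_le[of C R A] op_norm_tr_le[of R C "\<lambda>i j. A j i"] by (simp add: antisym)

lemma trG_trG[simp]: "trG (trG G) = G" unfolding trG_def by auto

lemma schur_tr_le:
  "schur_norm TYPE('f::real_normed_field) C R (trG G) \<le> schur_norm TYPE('f) R C G"
proof -
  have b: "biadj (trG G) i j = (biadj G j i :: 'f)" for i j unfolding biadj_def by simp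
  have e1: "op_norm C R (\<lambda>i j. biadj (trG G) i j * X i j) = op_norm R C (\<lambda>i j. biadj G i j * X j i)" for X :: "nat \<Rightarrow> nat \<Rightarrow> 'f"
    using op_norm_transpose[of C R "\<lambda>i j. biadj G i j * X j i"] by (simp add: b)
  have e2: "op_norm C R X = op_norm R C (\<lambda>i j. X j i)" for X :: "nat \<Rightarrow> nat \<Rightarrow> 'f"
    using op_norm_transpose[of C R "\<lambda>i j. X j i"] by simp
  { fix X :: "nat \<Rightarrow> nat \<Rightarrow> 'f" assume a: "op_norm C R X \<le> 1"
    have "op_norm C R (\<lambda>i j. biadj (trG G) i j * X i j) \<le> schur_norm TYPE('f) R C G"
      unfolding e1 by (rule schur_ge) (use a e2 in simp) }
  then show ?thesis unfolding schur_norm_def[where R=C and C=R and G="trG G"] by (intro Sup_least) blast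
qed

lemma schur_transpose:
  "schur_norm TYPE('f::real_normed_field) C R (trG G) = schur_norm TYPE('f) R C G"
  using schur_tr_le[where 'f='f, of C R G] schur_tr_le[where 'f='f, of R C "trG G"] by (simp add: antisym)

lemma twin_free_tr: "twin_free R C G \<Longrightarrow> twin_free C R (trG G)"
  unfolding twin_free_def row_nbrs_def col_nbrs_def by simp

lemma noH:
  fixes G :: "(nat \<times> nat) set"
  assumes sub: "G \<subseteq> R \<times> C" and tf: "twin_free R C G" and sn: "schur_norm TYPE('f::real_normed_field) R C G < ereal t0"
    and pq: "p \<in> R" "q \<in> R" "p \<noteq> q" and xyz: "x \<in> C" "y \<in> C" "z \<in> C" "x \<noteq> y" "x \<noteq> z" "y \<noteq> z"
    and m: "(p,x) \<in> G" "(p,y) \<in> G" "(p,z) \<notin> G" "(q,x) \<in> G" "(q,y) \<in> G" "(q,z) \<in> G"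
  shows False
proof -
  have "col_nbrs R G x \<noteq> col_nbrs R G y" using tf xyz unfolding twin_free_def by blast
  then obtain s where s: "s \<in> R" "(s,x) \<in> G \<longleftrightarrow> (s,y) \<notin> G" unfolding col_nbrs_def by auto
  have sp: "s \<noteq> p" "s \<noteq> q" using s m by auto
  have "ereal t0 \<le> schur_norm TYPE('f) R C G"
  proof (cases "(s,x) \<in> G")
    case True
    then have sy: "(s,y) \<notin> G" using s by simp
    show ?thesis
    proof (cases "(s,z) \<in> G")
      case False
      show ?thesis by (rule certT[of p q s y x z]) (use pq xyz m sp s True False sy in auto)
    next
      case zz: True
      show ?thesis by (rule certA[of p q s x y z]) (use pq xyz m sp s True zz sy in auto)
    qed
  next
    case False
    then have sy: "(s,y) \<in> G" using s by simp
    show ?thesis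
    proof (cases "(s,z) \<in> G")
      case zz: False
      show ?thesis by (rule certT[of p q s x y z]) (use pq xyz m sp s False zz sy in auto)
    next
      case zz: True
      show ?thesis by (rule certA[of p q s y x z]) (use pq xyz m sp s False zz sy in auto)
    qed
  qed
  then show False using sn by simp
qed

lemma four_elems:
  assumes "\<not> (finite N \<and> card N \<le> 3)"
  shows "\<exists>xs. set xs \<subseteq> N \<and> distinct xs \<and> length xs = 4"
proof -
  obtain T where T: "T \<subseteq> N" "finite T" "card T = 4"
  proof (cases "finite N")
    case True
    then have "4 \<le> card N" using assms by auto
    then obtain T where "T \<subseteq> N" "card T = 4" using obtain_subset_with_card_n by metis
    then show ?thesis using that True finite_subset by blast
  next
    case False
    then obtain T where "T \<subseteq> N" "finite T" "card T = 4" using infinite_arbitrarily_large by metis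
    then show ?thesis using that by blast
  qed
  obtain xs where xs: "set xs = T" "distinct xs" using finite_distinct_list[OF T(2)] by blast
  have "length xs = 4" using distinct_card[OF xs(2)] xs(1) T(3) by simp
  then show ?thesis using xs T(1) by blast
qed

lemma deg_rows:
  fixes G :: "(nat \<times> nat) set"
  assumes sub: "G \<subseteq> R \<times> C" and tf: "twin_free R C G"
    and sn: "schur_norm TYPE('f::real_normed_field) R C G < ereal t0" and r: "r \<in> R"
  shows "finite (row_nbrs C G r) \<and> card (row_nbrs C G r) \<le> 3"
proof (rule ccontr)
  assume "\<not> ?thesis"
  then obtain xs where xs: "set xs \<subseteq> row_nbrs C G r" "distinct xs" "length xs = 4" using four_elems by blast
  define c where "c i = xs ! i" for i
  have cN: "c i \<in> C" "(r, c i) \<in> G" if "i < 4" for i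
  proof -
    have "xs ! i \<in> set xs" using that xs(3) by simp
    then have "xs ! i \<in> row_nbrs C G r" using xs(1) by blast
    then show "c i \<in> C" "(r, c i) \<in> G" unfolding c_def row_nbrs_def by auto
  qed
  have cinj: "c i \<noteq> c j" if "i < 4" "j < 4" "i \<noteq> j" for i j
    using xs that nth_eq_iff_index_eq[of xs i j] unfolding c_def by auto
  define priv where "priv i \<longleftrightarrow> (\<exists>s\<in>R. (s, c i) \<in> G \<and> (\<forall>k<4. k \<noteq> i \<longrightarrow> (s, c k) \<notin> G))" for i
  have pair: "priv i \<or> priv j" if ij: "i < 4" "j < 4" "i \<noteq> j" for i j
  proof -
    have "col_nbrs R G (c i) \<noteq> col_nbrs R G (c j)"
      using tf cN(1)[OF ij(1)] cN(1)[OF ij(2)] cinj[OF ij] unfolding twin_free_def by blast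
    then obtain s where s: "s \<in> R" "(s, c i) \<in> G \<longleftrightarrow> (s, c j) \<notin> G" unfolding col_nbrs_def by auto
    have gen: "priv a" if ab: "a < 4" "b < 4" "a \<noteq> b" "(s, c a) \<in> G" "(s, c b) \<notin> G" for a b
    proof -
      have "(s, c k) \<notin> G" if k: "k < 4" "k \<noteq> a" for k
      proof
        assume sk: "(s, c k) \<in> G"
        then have kb: "k \<noteq> b" using ab by auto
        have sr: "s \<noteq> r" using ab cN(2)[OF ab(2)] by auto
        show False
          by (rule noH[OF sub tf sn, of s r "c a" "c k" "c b"])
             (use s r cN cinj ab k sk kb sr in auto)
      qed
      then show ?thesis unfolding priv_def using s(1) ab by blast
    qed
    show ?thesis using s gen[of i j] gen[of j i] ij by blast
  qed
  have K: False if abde: "a < 4" "b < 4" "d < 4" "e < 4" "a \<noteq> b" "a \<noteq> d" "a \<noteq> e" "b \<noteq> d" "b \<noteq> e" "d \<noteq> e"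
    and pr: "priv a" "priv b" "priv d" for a b d e
  proof -
    obtain sa where sa: "sa \<in> R" "(sa, c a) \<in> G" "\<forall>k<4. k \<noteq> a \<longrightarrow> (sa, c k) \<notin> G" using pr(1) unfolding priv_def by blast
    obtain sb where sb: "sb \<in> R" "(sb, c b) \<in> G" "\<forall>k<4. k \<noteq> b \<longrightarrow> (sb, c k) \<notin> G" using pr(2) unfolding priv_def by blast
    obtain sd where sd: "sd \<in> R" "(sd, c d) \<in> G" "\<forall>k<4. k \<noteq> d \<longrightarrow> (sd, c k) \<notin> G" using pr(3) unfolding priv_def by blast
    have m: "(sa, c b) \<notin> G" "(sa, c d) \<notin> G" "(sa, c e) \<notin> G"
      "(sb, c a) \<notin> G" "(sb, c d) \<notin> G" "(sb, c e) \<notin> G"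
      "(sd, c a) \<notin> G" "(sd, c b) \<notin> G" "(sd, c e) \<notin> G"
      using sa(3) sb(3) sd(3) abde by auto
    have rr: "(r, c a) \<in> G" "(r, c b) \<in> G" "(r, c d) \<in> G" "(r, c e) \<in> G" using cN abde by auto
    have cc: "c a \<in> C" "c b \<in> C" "c d \<in> C" "c e \<in> C" using cN abde by auto
    have ci: "c a \<noteq> c b" "c a \<noteq> c d" "c a \<noteq> c e" "c b \<noteq> c d" "c b \<noteq> c e" "c d \<noteq> c e"
      using cinj abde by auto
    have di: "r \<noteq> sa" "r \<noteq> sb" "r \<noteq> sd" "sa \<noteq> sb" "sa \<noteq> sd" "sb \<noteq> sd"
      using m rr sa(2) sb(2) sd(2) by auto
    have "ereal t0 \<le> schur_norm TYPE('f) R C G"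
      by (rule certK[of r sa sb sd "c a" "c b" "c d" "c e"]) (use m rr cc ci di sa sb sd r in auto)
    then show False using sn by simp
  qed
  show False
  proof (cases "priv 0")
    case False
    then show False using K[of 1 2 3 0] pair[of 0 1] pair[of 0 2] pair[of 0 3] by auto
  next
    case p0: True
    show False
    proof (cases "priv 1")
      case False
      then show False using K[of 0 2 3 1] p0 pair[of 1 2] pair[of 1 3] by auto
    next
      case p1: True
      show False
      proof (cases "priv 2")
        case False
        then show False using K[of 0 1 3 2] p0 p1 pair[of 2 3] by auto
      next
        case True
        then show False using K[of 0 1 2 3] p0 p1 by auto
      qed
    qed
  qed
qed

lemma part1:
  fixes G :: "(nat \<times> nat) set"
  assumes sub: "G \<subseteq> R \<times> C" and tf: "twin_free R C G"
    and sn: "schur_norm TYPE('f::real_normed_field) R C G < ereal t0"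
  shows "\<not> has_induced R C G H_rows H_cols H_edges"
proof
  assume "has_induced R C G H_rows H_cols H_edges"
  then obtain R0 C0 where RC0: "R0 \<subseteq> R" "C0 \<subseteq> C" and bi: "bip_iso R0 C0 (G \<inter> (R0 \<times> C0)) H_rows H_cols H_edges"
    unfolding has_induced_def by blast
  show False using bi unfolding bip_iso_def
  proof (elim disjE exE conjE)
    fix f g assume f: "bij_betw f R0 H_rows" and g: "bij_betw g C0 H_cols"
      and e: "\<forall>r\<in>R0. \<forall>c\<in>C0. ((r, c) \<in> G \<inter> (R0 \<times> C0)) = ((f r, g c) \<in> H_edges)"
    have fs: "f ` R0 = H_rows" and gs: "g ` C0 = H_cols" using f g by (auto simp: bij_betw_def)
    obtain p where p: "p \<in> R0" "f p = 0" using fs unfolding H_rows_def by (metis image_iff insertI1)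
    obtain q where q: "q \<in> R0" "f q = 1" using fs unfolding H_rows_def by (metis image_iff insertI1 insertI2)
    obtain x where x: "x \<in> C0" "g x = 0" using gs unfolding H_cols_def by (metis image_iff insertI1)
    obtain y where y: "y \<in> C0" "g y = 1" using gs unfolding H_cols_def by (metis image_iff insertI1 insertI2)
    obtain z where z: "z \<in> C0" "g z = 2" using gs unfolding H_cols_def by (metis image_iff insertI1 insertI2)
    have m: "(p,x) \<in> G" "(p,y) \<in> G" "(p,z) \<notin> G" "(q,x) \<in> G" "(q,y) \<in> G" "(q,z) \<in> G"
      using e p q x y z unfolding H_edges_def by auto
    show False
      by (rule noH[OF sub tf sn, of p q x y z]) (use RC0 p q x y z m in auto)
  next
    fix f g assume f: "bij_betw f R0 H_cols" and g: "bij_betw g C0 H_rows"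
      and e: "\<forall>r\<in>R0. \<forall>c\<in>C0. ((r, c) \<in> G \<inter> (R0 \<times> C0)) = ((g c, f r) \<in> H_edges)"
    have fs: "f ` R0 = H_cols" and gs: "g ` C0 = H_rows" using f g by (auto simp: bij_betw_def)
    obtain p where p: "p \<in> C0" "g p = 0" using gs unfolding H_rows_def by (metis image_iff insertI1)
    obtain q where q: "q \<in> C0" "g q = 1" using gs unfolding H_rows_def by (metis image_iff insertI1 insertI2)
    obtain x where x: "x \<in> R0" "f x = 0" using fs unfolding H_cols_def by (metis image_iff insertI1)
    obtain y where y: "y \<in> R0" "f y = 1" using fs unfolding H_cols_def by (metis image_iff insertI1 insertI2)
    obtain z where z: "z \<in> R0" "f z = 2" using fs unfolding H_cols_def by (metis image_iff insertI1 insertI2)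
    have m: "(p,x) \<in> trG G" "(p,y) \<in> trG G" "(p,z) \<notin> trG G" "(q,x) \<in> trG G" "(q,y) \<in> trG G" "(q,z) \<in> trG G"
      using e p q x y z unfolding H_edges_def by auto
    have sub': "trG G \<subseteq> C \<times> R" using sub unfolding trG_def by auto
    have sn': "schur_norm TYPE('f) C R (trG G) < ereal t0" using sn schur_transpose[where 'f='f, of C R G] by simp
    show False
      by (rule noH[OF sub' twin_free_tr[OF tf] sn', of p q x y z]) (use RC0 p q x y z m in auto)
  qed
qed

theorem lemma6p5:
  fixes R C :: "nat set" and G :: "(nat \<times> nat) set"
  assumes "in_Gamma R C G"
    and "twin_free R C G"
    and "schur_norm TYPE('f::real_normed_field) R C G < ereal ((9 + 4 * sqrt 6) / 15)"
  shows "\<not> has_induced R C G H_rows H_cols H_edges \<and>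
         (\<forall>r\<in>R. finite (row_nbrs C G r) \<and> card (row_nbrs C G r) \<le> 3) \<and>
         (\<forall>c\<in>C. finite (col_nbrs R G c) \<and> card (col_nbrs R G c) \<le> 3)"
proof -
  have sub: "G \<subseteq> R \<times> C" using assms(1) unfolding in_Gamma_def by blast
  have sn: "schur_norm TYPE('f) R C G < ereal t0" using assms(3) unfolding t0_def .
  have sub': "trG G \<subseteq> C \<times> R" using sub unfolding trG_def by auto
  have sn': "schur_norm TYPE('f) C R (trG G) < ereal t0" using sn schur_transpose[where 'f='f, of C R G] by simp
  have tf': "twin_free C R (trG G)" by (rule twin_free_tr[OF assms(2)])
  have p1: "\<not> has_induced R C G H_rows H_cols H_edges" by (rule part1[OF sub assms(2) sn])
  have p2: "\<forall>r\<in>R. finite (row_nbrs C G r) \<and> card (row_nbrs C G r) \<le> 3"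
    using deg_rows[OF sub assms(2) sn] by blast
  have cn: "col_nbrs R G c = row_nbrs R (trG G) c" for c unfolding col_nbrs_def row_nbrs_def by simp
  have p3: "\<forall>c\<in>C. finite (col_nbrs R G c) \<and> card (col_nbrs R G c) \<le> 3"
    unfolding cn using deg_rows[OF sub' tf' sn'] by blast
  show ?thesis using p1 p2 p3 by blast
qed

end
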